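(* Let $\mathbb{E}$ be a finitely complete category, $\Sigma$ a fibrational class of split epimorphisms, and suppose $\mathbb{E}$ is a $\Sigma$-Mal'tsev category. Let $(g,t)$ be any split epimorphism with $g\colon Y\to Z$. Let $g^*\colon \mathrm{Pt}_Z(\mathbb{E})\to\mathrm{Pt}_Y(\mathbb{E})$ be the base-change (pullback) functor along $g$ and $g^*_\Sigma\colon\Sigma_Z(\mathbb{E})\to\Sigma_Y(\mathbb{E})$ its restriction. Then: (a) (full faithfulness) for every object $A$ of $\Sigma_Z(\mathbb{E})$, every object $B$ of $\mathrm{Pt}_Z(\mathbb{E})$ and every morphism $h\colon g^*(A)\to g^*(B)$ in $\mathrm{Pt}_Y(\mathbb{E})$, there is a unique morphism $k\colon A\to B$ in $\mathrm{Pt}_Z(\mathbb{E})$ with $g^*(k)=h$; (b) (saturation on subobjects) $g^*$ preserves monomorphisms and, for every object $B$ of $\mathrm{Pt}_Z(\mathbb{E})$, induces a bijection between the subobjects of $B$ in $\mathrm{Pt}_Z(\mathbb{E})$ whose domain lies in $\Sigma_Z(\mathbb{E})$ and the subobjects of $g^*(B)$ in $\mathrm{Pt}_Y(\mathbb{E})$ whose domain lies in $\Sigma_Y(\mathbb{E})$.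
   Context: A split epimorphism is a pair $(f,s)$ with $fs=1$. $\mathrm{Pt}_Y(\mathbb{E})$ is the category of split epimorphisms with codomain $Y$ and morphisms commuting with the epimorphisms and the splittings; $\Sigma_Y(\mathbb{E})$ is its full subcategory of split epimorphisms in $\Sigma$. A class $\Sigma$ of split epimorphisms is fibrational if it contains all split epimorphisms $(f,s)$ with $f$ invertible and is stable under pullback along any morphism. A pair of morphisms with common codomain $W$ is jointly extremally epic if it factors jointly through no non-invertible monomorphism into $W$. $\mathbb{E}$ is $\Sigma$-Mal'tsev if for every split epimorphism $(f,s)\colon X\rightleftarrows Y$ in $\Sigma$ and every split epimorphism $(g,t)$ with $g\colon Y'\to Y$, letting $X'=Y'\times_YX$, $s'=(1_{Y'},sg)$, $\bar t=(tf,1_X)$, the pair $(s',\bar t)$ is jointly extremally epic. *)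

theory Defs
  imports Main
begin

text \<open>A category presented by a set of objects, hom-sets, composition
  (cmp C g f is g after f) and identities.\<close>
record ('o,'m) cat =
  Obj :: "'o set"
  Hom :: "'o \<Rightarrow> 'o \<Rightarrow> 'm set"
  cmp :: "'m \<Rightarrow> 'm \<Rightarrow> 'm"
  ide :: "'o \<Rightarrow> 'm"

definition category :: "('o,'m) cat \<Rightarrow> bool" where
  "category C \<longleftrightarrow>
    (\<forall>X Y. Hom C X Y \<noteq> {} \<longrightarrow> X \<in> Obj C \<and> Y \<in> Obj C) \<and>
    (\<forall>X\<in>Obj C. ide C X \<in> Hom C X X) \<and>
    (\<forall>X Y Z f g. f \<in> Hom C X Y \<longrightarrow> g \<in> Hom C Y Z \<longrightarrow> cmp C g f \<in> Hom C X Z) \<and>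
    (\<forall>X Y f. f \<in> Hom C X Y \<longrightarrow> cmp C (ide C Y) f = f \<and> cmp C f (ide C X) = f) \<and>
    (\<forall>W X Y Z f g h. f \<in> Hom C W X \<longrightarrow> g \<in> Hom C X Y \<longrightarrow> h \<in> Hom C Y Z \<longrightarrow>
        cmp C h (cmp C g f) = cmp C (cmp C h g) f)"

definition is_pullback :: "('o,'m) cat \<Rightarrow> 'o \<Rightarrow> 'o \<Rightarrow> 'o \<Rightarrow> 'm \<Rightarrow> 'm \<Rightarrow> 'o \<Rightarrow> 'm \<Rightarrow> 'm \<Rightarrow> bool" where
  "is_pullback C X Y Z f g P p1 p2 \<longleftrightarrow>
    f \<in> Hom C X Z \<and> g \<in> Hom C Y Z \<and> p1 \<in> Hom C P X \<and> p2 \<in> Hom C P Y \<and>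
    cmp C f p1 = cmp C g p2 \<and>
    (\<forall>Q q1 q2. q1 \<in> Hom C Q X \<longrightarrow> q2 \<in> Hom C Q Y \<longrightarrow> cmp C f q1 = cmp C g q2 \<longrightarrow>
       (\<exists>!u. u \<in> Hom C Q P \<and> cmp C p1 u = q1 \<and> cmp C p2 u = q2))"

definition terminal :: "('o,'m) cat \<Rightarrow> 'o \<Rightarrow> bool" where
  "terminal C T \<longleftrightarrow> T \<in> Obj C \<and> (\<forall>X\<in>Obj C. \<exists>!u. u \<in> Hom C X T)"

definition finitely_complete :: "('o,'m) cat \<Rightarrow> bool" where
  "finitely_complete C \<longleftrightarrow> category C \<and> (\<exists>T. terminal C T) \<and>
    (\<forall>X Y Z f g. f \<in> Hom C X Z \<longrightarrow> g \<in> Hom C Y Z \<longrightarrow>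
       (\<exists>P p1 p2. is_pullback C X Y Z f g P p1 p2))"

definition mono :: "('o,'m) cat \<Rightarrow> 'o \<Rightarrow> 'o \<Rightarrow> 'm \<Rightarrow> bool" where
  "mono C M W m \<longleftrightarrow> m \<in> Hom C M W \<and>
    (\<forall>A u v. u \<in> Hom C A M \<longrightarrow> v \<in> Hom C A M \<longrightarrow> cmp C m u = cmp C m v \<longrightarrow> u = v)"

definition invertible :: "('o,'m) cat \<Rightarrow> 'o \<Rightarrow> 'o \<Rightarrow> 'm \<Rightarrow> bool" where
  "invertible C X Y f \<longleftrightarrow> f \<in> Hom C X Y \<and>
    (\<exists>g\<in>Hom C Y X. cmp C g f = ide C X \<and> cmp C f g = ide C Y)"

definition split_epi :: "('o,'m) cat \<Rightarrow> 'o \<Rightarrow> 'o \<Rightarrow> 'm \<Rightarrow> 'm \<Rightarrow> bool" where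
  "split_epi C X Y f s \<longleftrightarrow> f \<in> Hom C X Y \<and> s \<in> Hom C Y X \<and> cmp C f s = ide C Y"

definition fibrational :: "('o,'m) cat \<Rightarrow> ('o \<Rightarrow> 'o \<Rightarrow> 'm \<Rightarrow> 'm \<Rightarrow> bool) \<Rightarrow> bool" where
  "fibrational C Sig \<longleftrightarrow>
    (\<forall>X Y f s. Sig X Y f s \<longrightarrow> split_epi C X Y f s) \<and>
    (\<forall>X Y f s. split_epi C X Y f s \<and> invertible C X Y f \<longrightarrow> Sig X Y f s) \<and>
    (\<forall>X Y f s Y' v X' f' v' s'. Sig X Y f s \<longrightarrow> v \<in> Hom C Y' Y \<longrightarrow>
       is_pullback C Y' X Y v f X' f' v' \<longrightarrow> s' \<in> Hom C Y' X' \<longrightarrow>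
       cmp C f' s' = ide C Y' \<longrightarrow> cmp C v' s' = cmp C s v \<longrightarrow> Sig X' Y' f' s')"

definition jointly_ext_epic :: "('o,'m) cat \<Rightarrow> 'o \<Rightarrow> 'o \<Rightarrow> 'o \<Rightarrow> 'm \<Rightarrow> 'm \<Rightarrow> bool" where
  "jointly_ext_epic C A B W a b \<longleftrightarrow> a \<in> Hom C A W \<and> b \<in> Hom C B W \<and>
    (\<forall>M m a' b'. mono C M W m \<longrightarrow> a' \<in> Hom C A M \<longrightarrow> b' \<in> Hom C B M \<longrightarrow>
       cmp C m a' = a \<longrightarrow> cmp C m b' = b \<longrightarrow> invertible C M W m)"

definition sigma_maltsev :: "('o,'m) cat \<Rightarrow> ('o \<Rightarrow> 'o \<Rightarrow> 'm \<Rightarrow> 'm \<Rightarrow> bool) \<Rightarrow> bool" where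
  "sigma_maltsev C Sig \<longleftrightarrow>
    (\<forall>X Y f s Y' g t X' p1 p2 s' tb. Sig X Y f s \<longrightarrow> split_epi C Y' Y g t \<longrightarrow>
       is_pullback C Y' X Y g f X' p1 p2 \<longrightarrow>
       s' \<in> Hom C Y' X' \<longrightarrow> cmp C p1 s' = ide C Y' \<longrightarrow> cmp C p2 s' = cmp C s g \<longrightarrow>
       tb \<in> Hom C X X' \<longrightarrow> cmp C p1 tb = cmp C t f \<longrightarrow> cmp C p2 tb = ide C X \<longrightarrow>
       jointly_ext_epic C Y' X X' s' tb)"

text \<open>A point (X, f, s) over Y: a split epimorphism (f,s) : X \<rightleftarrows> Y.\<close>
type_synonym ('o,'m) pt = "'o \<times> 'm \<times> 'm"

definition pcar :: "('o,'m) pt \<Rightarrow> 'o" where "pcar A = fst A"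
definition pmap :: "('o,'m) pt \<Rightarrow> 'm" where "pmap A = fst (snd A)"
definition psec :: "('o,'m) pt \<Rightarrow> 'm" where "psec A = snd (snd A)"

definition pt_ob :: "('o,'m) cat \<Rightarrow> 'o \<Rightarrow> ('o,'m) pt \<Rightarrow> bool" where
  "pt_ob C Y A \<longleftrightarrow> split_epi C (pcar A) Y (pmap A) (psec A)"

definition sig_ob :: "('o \<Rightarrow> 'o \<Rightarrow> 'm \<Rightarrow> 'm \<Rightarrow> bool) \<Rightarrow> 'o \<Rightarrow> ('o,'m) pt \<Rightarrow> bool" where
  "sig_ob Sig Y A \<longleftrightarrow> Sig (pcar A) Y (pmap A) (psec A)"

definition pt_hom :: "('o,'m) cat \<Rightarrow> 'o \<Rightarrow> ('o,'m) pt \<Rightarrow> ('o,'m) pt \<Rightarrow> 'm set" where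
  "pt_hom C Y A B = {u. pt_ob C Y A \<and> pt_ob C Y B \<and> u \<in> Hom C (pcar A) (pcar B) \<and>
      cmp C (pmap B) u = pmap A \<and> cmp C u (psec A) = psec B}"

definition pt_mono :: "('o,'m) cat \<Rightarrow> 'o \<Rightarrow> ('o,'m) pt \<Rightarrow> ('o,'m) pt \<Rightarrow> 'm \<Rightarrow> bool" where
  "pt_mono C Y A B m \<longleftrightarrow> m \<in> pt_hom C Y A B \<and>
    (\<forall>D u v. u \<in> pt_hom C Y D A \<longrightarrow> v \<in> pt_hom C Y D A \<longrightarrow> cmp C m u = cmp C m v \<longrightarrow> u = v)"

definition pt_iso :: "('o,'m) cat \<Rightarrow> 'o \<Rightarrow> ('o,'m) pt \<Rightarrow> ('o,'m) pt \<Rightarrow> 'm \<Rightarrow> bool" where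
  "pt_iso C Y A B u \<longleftrightarrow> u \<in> pt_hom C Y A B \<and>
    (\<exists>w\<in>pt_hom C Y B A. cmp C w u = ide C (pcar A) \<and> cmp C u w = ide C (pcar B))"

definition pb :: "('o,'m) cat \<Rightarrow> 'o \<Rightarrow> 'o \<Rightarrow> 'o \<Rightarrow> 'm \<Rightarrow> 'm \<Rightarrow> 'o \<times> 'm \<times> 'm" where
  "pb C X Y Z f g = (SOME (P, p1, p2). is_pullback C X Y Z f g P p1 p2)"

definition bc_data :: "('o,'m) cat \<Rightarrow> 'o \<Rightarrow> 'o \<Rightarrow> 'm \<Rightarrow> ('o,'m) pt \<Rightarrow> 'o \<times> 'm \<times> 'm" where
  "bc_data C Y Z g A = pb C Y (pcar A) Z g (pmap A)"

definition bc_ob :: "('o,'m) cat \<Rightarrow> 'o \<Rightarrow> 'o \<Rightarrow> 'm \<Rightarrow> ('o,'m) pt \<Rightarrow> ('o,'m) pt" where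
  "bc_ob C Y Z g A = (case bc_data C Y Z g A of (P, q, r) \<Rightarrow>
     (P, q, THE s'. s' \<in> Hom C Y P \<and> cmp C q s' = ide C Y \<and> cmp C r s' = cmp C (psec A) g))"

definition bc_hom :: "('o,'m) cat \<Rightarrow> 'o \<Rightarrow> 'o \<Rightarrow> 'm \<Rightarrow> ('o,'m) pt \<Rightarrow> ('o,'m) pt \<Rightarrow> 'm \<Rightarrow> 'm" where
  "bc_hom C Y Z g A B k = (case bc_data C Y Z g A of (PA, qA, rA) \<Rightarrow>
     (case bc_data C Y Z g B of (PB, qB, rB) \<Rightarrow>
       THE u. u \<in> Hom C PA PB \<and> cmp C qB u = qA \<and> cmp C rB u = cmp C k rA))"

definition subrep :: "('o,'m) cat \<Rightarrow> 'o \<Rightarrow> (('o,'m) pt \<Rightarrow> bool) \<Rightarrow> ('o,'m) pt \<Rightarrow> (('o,'m) pt \<times> 'm) set" where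
  "subrep C Y S B = {(A, m). pt_ob C Y A \<and> S A \<and> pt_mono C Y A B m}"

definition sub_equiv :: "('o,'m) cat \<Rightarrow> 'o \<Rightarrow> ('o,'m) pt \<times> 'm \<Rightarrow> ('o,'m) pt \<times> 'm \<Rightarrow> bool" where
  "sub_equiv C Y r r' \<longleftrightarrow> (\<exists>u. pt_iso C Y (fst r) (fst r') u \<and> cmp C (snd r') u = snd r)"

definition subobjects :: "('o,'m) cat \<Rightarrow> 'o \<Rightarrow> (('o,'m) pt \<Rightarrow> bool) \<Rightarrow> ('o,'m) pt \<Rightarrow> (('o,'m) pt \<times> 'm) set set" where
  "subobjects C Y S B = (\<lambda>r. {r' \<in> subrep C Y S B. sub_equiv C Y r' r}) ` subrep C Y S B"

text \<open>The map on subobjects induced by g^*: a class c is sent to the union of the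
  classes of g^*(m) for m in c (a single class whenever well defined).\<close>
definition bc_sub :: "('o,'m) cat \<Rightarrow> ('o \<Rightarrow> 'o \<Rightarrow> 'm \<Rightarrow> 'm \<Rightarrow> bool) \<Rightarrow> 'o \<Rightarrow> 'o \<Rightarrow> 'm \<Rightarrow>
    ('o,'m) pt \<Rightarrow> (('o,'m) pt \<times> 'm) set \<Rightarrow> (('o,'m) pt \<times> 'm) set" where
  "bc_sub C Sig Y Z g B c = {r' \<in> subrep C Y (sig_ob Sig Y) (bc_ob C Y Z g B).
      \<exists>(A, m)\<in>c. sub_equiv C Y r' (bc_ob C Y Z g A, bc_hom C Y Z g A B m)}"

end

theory Submission
  imports Defs
begin


locale fcat =
  fixes C :: "('o,'m) cat"
  assumes fc: "finitely_complete C"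
begin

abbreviation comp (infixr "\<cdot>" 55) where "g \<cdot> f \<equiv> cmp C g f"

lemma cat: "category C" using fc unfolding finitely_complete_def by blast

lemma comp_hom: "f \<in> Hom C X Y \<Longrightarrow> g \<in> Hom C Y Z \<Longrightarrow> g \<cdot> f \<in> Hom C X Z"
  using cat unfolding category_def by blast

lemma hom_obj: "f \<in> Hom C X Y \<Longrightarrow> X \<in> Obj C \<and> Y \<in> Obj C"
  using cat unfolding category_def by blast

lemma id_hom: "X \<in> Obj C \<Longrightarrow> ide C X \<in> Hom C X X"
  using cat unfolding category_def by blast

lemma id_hom1: "f \<in> Hom C X Y \<Longrightarrow> ide C X \<in> Hom C X X"
  using hom_obj id_hom by blast
lemma id_hom2: "f \<in> Hom C X Y \<Longrightarrow> ide C Y \<in> Hom C Y Y"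
  using hom_obj id_hom by blast

lemma id_l: "f \<in> Hom C X Y \<Longrightarrow> ide C Y \<cdot> f = f"
  using cat unfolding category_def by blast
lemma id_r: "f \<in> Hom C X Y \<Longrightarrow> f \<cdot> ide C X = f"
  using cat unfolding category_def by blast

lemma assoc: "f \<in> Hom C W X \<Longrightarrow> g \<in> Hom C X Y \<Longrightarrow> h \<in> Hom C Y Z \<Longrightarrow>
   (h \<cdot> g) \<cdot> f = h \<cdot> (g \<cdot> f)"
  using cat unfolding category_def by metis

lemma pb_exists: "f \<in> Hom C X Z \<Longrightarrow> g \<in> Hom C Y Z \<Longrightarrow> \<exists>P p1 p2. is_pullback C X Y Z f g P p1 p2"
  using fc unfolding finitely_complete_def by blast

lemma pbD:
  assumes "is_pullback C X Y Z f g P p1 p2"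
  shows "f \<in> Hom C X Z" "g \<in> Hom C Y Z" "p1 \<in> Hom C P X" "p2 \<in> Hom C P Y" "f \<cdot> p1 = g \<cdot> p2"
  using assms unfolding is_pullback_def by blast+

lemma pb_ex:
  assumes "is_pullback C X Y Z f g P p1 p2" "q1 \<in> Hom C Q X" "q2 \<in> Hom C Q Y" "f \<cdot> q1 = g \<cdot> q2"
  obtains u where "u \<in> Hom C Q P" "p1 \<cdot> u = q1" "p2 \<cdot> u = q2"
  using assms unfolding is_pullback_def by blast

lemma pb_uniq:
  assumes pb: "is_pullback C X Y Z f g P p1 p2" and u: "u \<in> Hom C Q P" and v: "v \<in> Hom C Q P"
   and "p1 \<cdot> u = p1 \<cdot> v" "p2 \<cdot> u = p2 \<cdot> v"
  shows "u = v"
proof -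
  note d = pbD[OF pb]
  have h1: "p1 \<cdot> u \<in> Hom C Q X" using comp_hom u d by blast
  have h2: "p2 \<cdot> u \<in> Hom C Q Y" using comp_hom u d by blast
  have "f \<cdot> (p1 \<cdot> u) = g \<cdot> (p2 \<cdot> u)" using assoc[OF u d(3) d(1)] assoc[OF u d(4) d(2)] d(5) by simp
  then have "\<exists>!w. w \<in> Hom C Q P \<and> p1 \<cdot> w = p1 \<cdot> u \<and> p2 \<cdot> w = p2 \<cdot> u"
    using pb h1 h2 unfolding is_pullback_def by blast
  then show ?thesis using u v assms(4,5) by metis
qed

lemma pb_the:
  assumes pb: "is_pullback C X Y Z f g P p1 p2" and u: "u \<in> Hom C Q P"
    "p1 \<cdot> u = q1" "p2 \<cdot> u = q2"
  shows "(THE w. w \<in> Hom C Q P \<and> p1 \<cdot> w = q1 \<and> p2 \<cdot> w = q2) = u"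
  apply (rule the_equality)
  using u apply blast
  using pb_uniq[OF pb] u by metis

lemma pb_chosen:
  assumes "f \<in> Hom C X Z" "g \<in> Hom C Y Z"
  shows "is_pullback C X Y Z f g (fst (pb C X Y Z f g)) (fst (snd (pb C X Y Z f g))) (snd (snd (pb C X Y Z f g)))"
proof -
  obtain P p1 p2 where "is_pullback C X Y Z f g P p1 p2" using pb_exists assms by blast
  then have "\<exists>x. (case x of (P, p1, p2) \<Rightarrow> is_pullback C X Y Z f g P p1 p2)" by auto
  then have "(case pb C X Y Z f g of (P, p1, p2) \<Rightarrow> is_pullback C X Y Z f g P p1 p2)"
    unfolding pb_def by (rule someI_ex)
  then show ?thesis by (auto split: prod.splits)
qed

lemma mono_cancel: "mono C M W m \<Longrightarrow> u \<in> Hom C A M \<Longrightarrow> v \<in> Hom C A M \<Longrightarrow> m \<cdot> u = m \<cdot> v \<Longrightarrow> u = v"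
  unfolding mono_def by blast

lemma pb_mono:
  assumes pb: "is_pullback C X Y Z f g P p1 p2" and m: "mono C Y Z g"
  shows "mono C P X p1"
  unfolding mono_def
proof (intro conjI allI impI)
  note d = pbD[OF pb]
  show "p1 \<in> Hom C P X" by (rule d(3))
  fix A u v assume u: "u \<in> Hom C A P" and v: "v \<in> Hom C A P" and e: "p1 \<cdot> u = p1 \<cdot> v"
  have "g \<cdot> (p2 \<cdot> u) = g \<cdot> (p2 \<cdot> v)"
    using assoc[OF u d(4) d(2)] assoc[OF v d(4) d(2)] assoc[OF u d(3) d(1)] assoc[OF v d(3) d(1)] d(5) e
    by metis
  then have "p2 \<cdot> u = p2 \<cdot> v" using mono_cancel[OF m] comp_hom u v d by blast
  then show "u = v" using pb_uniq[OF pb u v e] by blast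
qed

lemma pb_sym: "is_pullback C X Y Z f g P p1 p2 \<Longrightarrow> is_pullback C Y X Z g f P p2 p1"
  unfolding is_pullback_def by metis

end

context fcat begin

lemma jeeD: "jointly_ext_epic C A B W a b \<Longrightarrow> a \<in> Hom C A W \<and> b \<in> Hom C B W"
  unfolding jointly_ext_epic_def by blast

lemma jee_factor:
  assumes j: "jointly_ext_epic C A B W a b" and n: "mono C D V n" and th: "\<theta> \<in> Hom C W V"
   and a2: "a2 \<in> Hom C A D" and b2: "b2 \<in> Hom C B D" and ea: "\<theta> \<cdot> a = n \<cdot> a2" and eb: "\<theta> \<cdot> b = n \<cdot> b2"
  shows "\<exists>\<rho>\<in>Hom C W D. n \<cdot> \<rho> = \<theta>"
proof -
  have nh: "n \<in> Hom C D V" using n unfolding mono_def by blast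
  have a: "a \<in> Hom C A W" and b: "b \<in> Hom C B W" using jeeD[OF j] by auto
  obtain M \<mu> \<nu> where pb: "is_pullback C W D V \<theta> n M \<mu> \<nu>" using pb_exists th nh by blast
  note d = pbD[OF pb]
  have mm: "mono C M W \<mu>" by (rule pb_mono[OF pb n])
  obtain a' where a': "a' \<in> Hom C A M" "\<mu> \<cdot> a' = a" "\<nu> \<cdot> a' = a2" using pb_ex[OF pb a a2 ea] by blast
  obtain b' where b': "b' \<in> Hom C B M" "\<mu> \<cdot> b' = b" "\<nu> \<cdot> b' = b2" using pb_ex[OF pb b b2 eb] by blast
  have "invertible C M W \<mu>" using j mm a' b' unfolding jointly_ext_epic_def by blast
  then obtain mi where mi: "mi \<in> Hom C W M" "\<mu> \<cdot> mi = ide C W" unfolding invertible_def by blast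
  have "n \<cdot> (\<nu> \<cdot> mi) = (n \<cdot> \<nu>) \<cdot> mi" using assoc[OF mi(1) d(4) nh] by simp
  also have "\<dots> = (\<theta> \<cdot> \<mu>) \<cdot> mi" using d(5) by simp
  also have "\<dots> = \<theta> \<cdot> (\<mu> \<cdot> mi)" using assoc[OF mi(1) d(3) th] by simp
  also have "\<dots> = \<theta>" using mi(2) id_r[OF th] by simp
  finally show ?thesis using comp_hom[OF mi(1) d(4)] by blast
qed

lemma jee_eq:
  assumes j: "jointly_ext_epic C A B W a b" and h: "h \<in> Hom C W V" and h': "h' \<in> Hom C W V"
   and ph: "\<phi> \<in> Hom C V U" and e0: "\<phi> \<cdot> h = \<phi> \<cdot> h'" and ea: "h \<cdot> a = h' \<cdot> a" and eb: "h \<cdot> b = h' \<cdot> b"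
  shows "h = h'"
proof -
  have a: "a \<in> Hom C A W" and b: "b \<in> Hom C B W" using jeeD[OF j] by auto
  obtain K k1 k2 where pb: "is_pullback C V V U \<phi> \<phi> K k1 k2" using pb_exists ph by blast
  note d = pbD[OF pb]
  have iV: "ide C V \<in> Hom C V V" using id_hom1[OF ph] .
  obtain \<delta> where de: "\<delta> \<in> Hom C V K" "k1 \<cdot> \<delta> = ide C V" "k2 \<cdot> \<delta> = ide C V"
    using pb_ex[OF pb iV iV] by blast
  have dm: "mono C V K \<delta>" unfolding mono_def
  proof (intro conjI allI impI)
    show "\<delta> \<in> Hom C V K" by (rule de(1))
    fix A u v assume u: "u \<in> Hom C A V" and v: "v \<in> Hom C A V" and e: "\<delta> \<cdot> u = \<delta> \<cdot> v"
    have "u = (k1 \<cdot> \<delta>) \<cdot> u" using de id_l[OF u] by simp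
    also have "\<dots> = k1 \<cdot> (\<delta> \<cdot> v)" using assoc[OF u de(1) d(3)] e by simp
    also have "\<dots> = v" using assoc[OF v de(1) d(3)] de id_l[OF v] by simp
    finally show "u = v" .
  qed
  obtain \<theta> where th: "\<theta> \<in> Hom C W K" "k1 \<cdot> \<theta> = h" "k2 \<cdot> \<theta> = h'" using pb_ex[OF pb h h' e0] by blast
  have fa: "\<theta> \<cdot> c = \<delta> \<cdot> (h \<cdot> c)" if c: "c \<in> Hom C A0 W" "h \<cdot> c = h' \<cdot> c" for c A0
  proof (rule pb_uniq[OF pb])
    show "\<theta> \<cdot> c \<in> Hom C A0 K" using comp_hom c th by blast
    show "\<delta> \<cdot> (h \<cdot> c) \<in> Hom C A0 K" using comp_hom c h de by blast
    have hc: "h \<cdot> c \<in> Hom C A0 V" using comp_hom c h by blast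
    show "k1 \<cdot> \<theta> \<cdot> c = k1 \<cdot> \<delta> \<cdot> h \<cdot> c"
      using assoc[OF c(1) th(1) d(3)] assoc[OF hc de(1) d(3)] th de id_l[OF hc] by simp
    show "k2 \<cdot> \<theta> \<cdot> c = k2 \<cdot> \<delta> \<cdot> h \<cdot> c"
      using assoc[OF c(1) th(1) d(4)] assoc[OF hc de(1) d(4)] th de id_l[OF hc] c(2) by simp
  qed
  obtain \<rho> where r: "\<rho> \<in> Hom C W V" "\<delta> \<cdot> \<rho> = \<theta>"
    using jee_factor[OF j dm th(1) comp_hom[OF a h] comp_hom[OF b h] fa[OF a ea] fa[OF b eb]] by blast
  have "h = \<rho>" using th(2) r assoc[OF r(1) de(1) d(3)] de id_l[OF r(1)] by simp
  moreover have "h' = \<rho>" using th(3) r assoc[OF r(1) de(1) d(4)] de id_l[OF r(1)] by simp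
  ultimately show ?thesis by simp
qed

end

context fcat begin

lemma pt_obD: "pt_ob C Y0 A \<Longrightarrow> pmap A \<in> Hom C (pcar A) Y0 \<and> psec A \<in> Hom C Y0 (pcar A) \<and> pmap A \<cdot> psec A = ide C Y0"
  unfolding pt_ob_def split_epi_def by blast

lemma pt_homD: "u \<in> pt_hom C Y0 A B \<Longrightarrow> pt_ob C Y0 A \<and> pt_ob C Y0 B \<and> u \<in> Hom C (pcar A) (pcar B) \<and>
      pmap B \<cdot> u = pmap A \<and> u \<cdot> psec A = psec B"
  unfolding pt_hom_def by blast

lemma pt_homI: "pt_ob C Y0 A \<Longrightarrow> pt_ob C Y0 B \<Longrightarrow> u \<in> Hom C (pcar A) (pcar B) \<Longrightarrow>
      pmap B \<cdot> u = pmap A \<Longrightarrow> u \<cdot> psec A = psec B \<Longrightarrow> u \<in> pt_hom C Y0 A B"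
  unfolding pt_hom_def by blast

lemma pt_simps[simp]: "pcar (X,f,s) = X" "pmap (X,f,s) = f" "psec (X,f,s) = s"
  unfolding pcar_def pmap_def psec_def by auto

lemma pt_mono_mono:
  assumes m: "pt_mono C Y0 A B m"
  shows "mono C (pcar A) (pcar B) m"
proof -
  have mh: "m \<in> pt_hom C Y0 A B" using m unfolding pt_mono_def by blast
  note md = pt_homD[OF mh]
  note ad = pt_obD[OF conjunct1[OF md]]
  note bd = pt_obD[OF conjunct1[OF conjunct2[OF md]]]
  have mH: "m \<in> Hom C (pcar A) (pcar B)" using md by blast
  obtain K k1 k2 where pb: "is_pullback C (pcar A) (pcar A) (pcar B) m m K k1 k2" using pb_exists mH by blast
  note d = pbD[OF pb]
  have sA: "psec A \<in> Hom C Y0 (pcar A)" using ad by blast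
  obtain \<sigma> where sg: "\<sigma> \<in> Hom C Y0 K" "k1 \<cdot> \<sigma> = psec A" "k2 \<cdot> \<sigma> = psec A" using pb_ex[OF pb sA sA] by blast
  define Kp where "Kp = (K, pmap A \<cdot> k1, \<sigma>)"
  have fA: "pmap A \<in> Hom C (pcar A) Y0" using ad by blast
  have kob: "pt_ob C Y0 Kp" unfolding Kp_def pt_ob_def split_epi_def
    using comp_hom[OF d(3) fA] sg assoc[OF sg(1) d(3) fA] ad by simp
  have k1h: "k1 \<in> pt_hom C Y0 Kp A"
    by (rule pt_homI) (use kob md d sg in \<open>auto simp: Kp_def\<close>)
  have "pmap A \<cdot> k2 = pmap A \<cdot> k1"
  proof -
    have "pmap A \<cdot> k2 = (pmap B \<cdot> m) \<cdot> k2" using md by simp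
    also have "\<dots> = pmap B \<cdot> (m \<cdot> k1)" using assoc[OF d(4) mH conjunct1[OF bd]] d(5) by simp
    also have "\<dots> = pmap A \<cdot> k1" using assoc[OF d(3) mH conjunct1[OF bd]] md by simp
    finally show ?thesis .
  qed
  then have k2h: "k2 \<in> pt_hom C Y0 Kp A"
    by (intro pt_homI) (use kob md d sg in \<open>auto simp: Kp_def\<close>)
  have k12: "k1 = k2" using m k1h k2h d(5) unfolding pt_mono_def by blast
  show ?thesis unfolding mono_def
  proof (intro conjI allI impI)
    show "m \<in> Hom C (pcar A) (pcar B)" by (rule mH)
    fix W u v assume u: "u \<in> Hom C W (pcar A)" and v: "v \<in> Hom C W (pcar A)" and e: "m \<cdot> u = m \<cdot> v"
    obtain w where "w \<in> Hom C W K" "k1 \<cdot> w = u" "k2 \<cdot> w = v" using pb_ex[OF pb u v e] by blast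
    then show "u = v" using k12 by simp
  qed
qed

lemma mono_pt_mono: "mono C (pcar A) (pcar B) m \<Longrightarrow> m \<in> pt_hom C Y0 A B \<Longrightarrow> pt_mono C Y0 A B m"
  unfolding pt_mono_def mono_def pt_hom_def by blast

end


locale bcl = fcat +
  fixes Y Z :: 'a and g t :: 'b
  assumes se: "split_epi C Y Z g t"
begin

lemma gH: "g \<in> Hom C Y Z" and tH: "t \<in> Hom C Z Y" and gt: "g \<cdot> t = ide C Z"
  using se unfolding split_epi_def by auto

definition PA where "PA A = fst (bc_data C Y Z g A)"
definition qA where "qA A = fst (snd (bc_data C Y Z g A))"
definition rA where "rA A = snd (snd (bc_data C Y Z g A))"
definition sA where "sA A = (THE s'. s' \<in> Hom C Y (PA A) \<and> qA A \<cdot> s' = ide C Y \<and> rA A \<cdot> s' = psec A \<cdot> g)"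

lemma bc_pb: "pt_ob C Z A \<Longrightarrow> is_pullback C Y (pcar A) Z g (pmap A) (PA A) (qA A) (rA A)"
  unfolding PA_def qA_def rA_def bc_data_def using pb_chosen gH pt_obD by blast

lemma bc_ob_eq: "bc_ob C Y Z g A = (PA A, qA A, sA A)"
  unfolding bc_ob_def PA_def qA_def rA_def sA_def by (simp split: prod.split)

lemma bc_ob_simps[simp]: "pcar (bc_ob C Y Z g A) = PA A" "pmap (bc_ob C Y Z g A) = qA A"
   "psec (bc_ob C Y Z g A) = sA A"
  by (simp_all add: bc_ob_eq)

lemma bc_hom_eq0: "bc_hom C Y Z g A B k =
   (THE u. u \<in> Hom C (PA A) (PA B) \<and> qA B \<cdot> u = qA A \<and> rA B \<cdot> u = k \<cdot> rA A)"
  unfolding bc_hom_def PA_def qA_def rA_def by (simp split: prod.split)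

lemma iY: "ide C Y \<in> Hom C Y Y" using id_hom1[OF gH] .
lemma iZ: "ide C Z \<in> Hom C Z Z" using id_hom2[OF gH] .

lemma sA_props:
  assumes A: "pt_ob C Z A"
  shows "sA A \<in> Hom C Y (PA A)" "qA A \<cdot> sA A = ide C Y" "rA A \<cdot> sA A = psec A \<cdot> g"
proof -
  note pb = bc_pb[OF A]
  note a = pt_obD[OF A]
  have sg: "psec A \<cdot> g \<in> Hom C Y (pcar A)" using comp_hom gH a by blast
  have e: "g \<cdot> ide C Y = pmap A \<cdot> (psec A \<cdot> g)"
    using id_r[OF gH] assoc[OF gH conjunct1[OF conjunct2[OF a]] conjunct1[OF a]] a id_l[OF gH] by simp
  obtain u where u: "u \<in> Hom C Y (PA A)" "qA A \<cdot> u = ide C Y" "rA A \<cdot> u = psec A \<cdot> g"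
    using pb_ex[OF pb iY sg e] by blast
  have "sA A = u" unfolding sA_def by (rule pb_the[OF pb u])
  then show "sA A \<in> Hom C Y (PA A)" "qA A \<cdot> sA A = ide C Y" "rA A \<cdot> sA A = psec A \<cdot> g" using u by auto
qed

lemma bc_pt: assumes "pt_ob C Z A" shows "pt_ob C Y (bc_ob C Y Z g A)"
  unfolding pt_ob_def split_epi_def using sA_props[OF assms] pbD[OF bc_pb[OF assms]] by simp

lemma tb_ex:
  assumes A: "pt_ob C Z A"
  obtains tb where "tb \<in> Hom C (pcar A) (PA A)" "qA A \<cdot> tb = t \<cdot> pmap A" "rA A \<cdot> tb = ide C (pcar A)"
     "tb \<cdot> psec A = sA A \<cdot> t"
proof -
  note pb = bc_pb[OF A]
  note a = pt_obD[OF A]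
  have fA: "pmap A \<in> Hom C (pcar A) Z" and sA0: "psec A \<in> Hom C Z (pcar A)" using a by auto
  have tf: "t \<cdot> pmap A \<in> Hom C (pcar A) Y" using comp_hom tH fA by blast
  have iX: "ide C (pcar A) \<in> Hom C (pcar A) (pcar A)" using id_hom1[OF fA] .
  have e: "g \<cdot> (t \<cdot> pmap A) = pmap A \<cdot> ide C (pcar A)"
    using assoc[OF fA tH gH] gt id_l[OF fA] id_r[OF fA] by simp
  obtain tb where tb: "tb \<in> Hom C (pcar A) (PA A)" "qA A \<cdot> tb = t \<cdot> pmap A" "rA A \<cdot> tb = ide C (pcar A)"
    using pb_ex[OF pb tf iX e] by blast
  note s = sA_props[OF A]
  note d = pbD[OF pb]
  have "tb \<cdot> psec A = sA A \<cdot> t"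
  proof (rule pb_uniq[OF pb])
    show "tb \<cdot> psec A \<in> Hom C Z (PA A)" using comp_hom tb sA0 by blast
    show "sA A \<cdot> t \<in> Hom C Z (PA A)" using comp_hom s tH by blast
    show "qA A \<cdot> tb \<cdot> psec A = qA A \<cdot> sA A \<cdot> t"
      using assoc[OF sA0 tb(1) d(3)] assoc[OF tH s(1) d(3)] tb s assoc[OF sA0 fA tH] a id_l[OF tH] id_r[OF tH]
      by simp
    show "rA A \<cdot> tb \<cdot> psec A = rA A \<cdot> sA A \<cdot> t"
      using assoc[OF sA0 tb(1) d(4)] assoc[OF tH s(1) d(4)] tb s assoc[OF tH gH sA0] gt id_l[OF sA0] id_r[OF sA0]
      by simp
  qed
  then show ?thesis using that tb by blast
qed

lemma bc_hom_props:
  assumes A: "pt_ob C Z A" and B: "pt_ob C Z B" and k: "k \<in> Hom C (pcar A) (pcar B)" and fk: "pmap B \<cdot> k = pmap A"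
  shows "bc_hom C Y Z g A B k \<in> Hom C (PA A) (PA B)" "qA B \<cdot> bc_hom C Y Z g A B k = qA A"
        "rA B \<cdot> bc_hom C Y Z g A B k = k \<cdot> rA A"
proof -
  note pA = pbD[OF bc_pb[OF A]] and pB = bc_pb[OF B]
  note b = pt_obD[OF B]
  have kr: "k \<cdot> rA A \<in> Hom C (PA A) (pcar B)" using comp_hom pA k by blast
  have e: "g \<cdot> qA A = pmap B \<cdot> (k \<cdot> rA A)" using pA assoc[OF pA(4) k conjunct1[OF b]] fk by simp
  obtain u where u: "u \<in> Hom C (PA A) (PA B)" "qA B \<cdot> u = qA A" "rA B \<cdot> u = k \<cdot> rA A"
    using pb_ex[OF pB pA(3) kr e] by blast
  have "bc_hom C Y Z g A B k = u" unfolding bc_hom_eq0 by (rule pb_the[OF pB u])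
  then show "bc_hom C Y Z g A B k \<in> Hom C (PA A) (PA B)" "qA B \<cdot> bc_hom C Y Z g A B k = qA A"
        "rA B \<cdot> bc_hom C Y Z g A B k = k \<cdot> rA A" using u by auto
qed

lemma bc_hom_eq:
  assumes A: "pt_ob C Z A" and B: "pt_ob C Z B" and u: "u \<in> Hom C (PA A) (PA B)" "qA B \<cdot> u = qA A" "rA B \<cdot> u = k \<cdot> rA A"
  shows "bc_hom C Y Z g A B k = u"
  unfolding bc_hom_eq0 by (rule pb_the[OF bc_pb[OF B] u])

end

context bcl begin

lemma bc_pt_hom:
  assumes k: "k \<in> pt_hom C Z A B"
  shows "bc_hom C Y Z g A B k \<in> pt_hom C Y (bc_ob C Y Z g A) (bc_ob C Y Z g B)"
proof -
  note kd = pt_homD[OF k]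
  have A: "pt_ob C Z A" and B: "pt_ob C Z B" and kH: "k \<in> Hom C (pcar A) (pcar B)" using kd by auto
  note u = bc_hom_props[OF A B kH conjunct1[OF conjunct2[OF conjunct2[OF conjunct2[OF kd]]]]]
  define u0 where "u0 = bc_hom C Y Z g A B k"
  note u = u[folded u0_def]
  note sa = sA_props[OF A] and sb = sA_props[OF B]
  note pB = bc_pb[OF B] note dB = pbD[OF pB] note dA = pbD[OF bc_pb[OF A]]
  note a = pt_obD[OF A]
  have sAH: "psec A \<in> Hom C Z (pcar A)" using a by blast
  have "u0 \<cdot> sA A = sA B"
  proof (rule pb_uniq[OF pB])
    show "u0 \<cdot> sA A \<in> Hom C Y (PA B)" using comp_hom u sa by blast
    show "sA B \<in> Hom C Y (PA B)" using sb by blast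
    show "qA B \<cdot> u0 \<cdot> sA A = qA B \<cdot> sA B" using assoc[OF sa(1) u(1) dB(3)] u sa sb by simp
    have "rA B \<cdot> u0 \<cdot> sA A = (k \<cdot> rA A) \<cdot> sA A" using assoc[OF sa(1) u(1) dB(4)] u by simp
    also have "\<dots> = k \<cdot> psec A \<cdot> g" using assoc[OF sa(1) dA(4) kH] sa by simp
    also have "\<dots> = psec B \<cdot> g" using assoc[OF gH sAH kH] kd by simp
    finally show "rA B \<cdot> u0 \<cdot> sA A = rA B \<cdot> sA B" using sb by simp
  qed
  then show ?thesis unfolding u0_def[symmetric]
    using bc_pt[OF A] bc_pt[OF B] u by (intro pt_homI) auto
qed

lemma bc_comp:
  assumes A: "pt_ob C Z A" and B: "pt_ob C Z B" and D: "pt_ob C Z D"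
   and k1: "k1 \<in> Hom C (pcar A) (pcar B)" "pmap B \<cdot> k1 = pmap A"
   and k2: "k2 \<in> Hom C (pcar B) (pcar D)" "pmap D \<cdot> k2 = pmap B"
  shows "bc_hom C Y Z g A D (k2 \<cdot> k1) = bc_hom C Y Z g B D k2 \<cdot> bc_hom C Y Z g A B k1"
proof (rule bc_hom_eq[OF A D])
  note u1 = bc_hom_props[OF A B k1] and u2 = bc_hom_props[OF B D k2]
  note dD = pbD[OF bc_pb[OF D]] and dB = pbD[OF bc_pb[OF B]] and dA = pbD[OF bc_pb[OF A]]
  show "bc_hom C Y Z g B D k2 \<cdot> bc_hom C Y Z g A B k1 \<in> Hom C (PA A) (PA D)" using comp_hom u1 u2 by blast
  show "qA D \<cdot> bc_hom C Y Z g B D k2 \<cdot> bc_hom C Y Z g A B k1 = qA A"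
    using assoc[OF u1(1) u2(1) dD(3)] u1 u2 by simp
  show "rA D \<cdot> bc_hom C Y Z g B D k2 \<cdot> bc_hom C Y Z g A B k1 = (k2 \<cdot> k1) \<cdot> rA A"
    using assoc[OF u1(1) u2(1) dD(4)] u1 u2 assoc[OF u1(1) dB(4) k2(1)] assoc[OF dA(4) k1(1) k2(1)] by simp
qed

lemma bc_id:
  assumes A: "pt_ob C Z A"
  shows "bc_hom C Y Z g A A (ide C (pcar A)) = ide C (PA A)"
proof (rule bc_hom_eq[OF A A])
  note dA = pbD[OF bc_pb[OF A]]
  show "ide C (PA A) \<in> Hom C (PA A) (PA A)" using id_hom1[OF dA(3)] .
  show "qA A \<cdot> ide C (PA A) = qA A" using id_r[OF dA(3)] .
  show "rA A \<cdot> ide C (PA A) = ide C (pcar A) \<cdot> rA A" using id_r[OF dA(4)] id_l[OF dA(4)] by simp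
qed

lemma bc_faithful:
  assumes A: "pt_ob C Z A" and B: "pt_ob C Z B"
   and k1: "k1 \<in> Hom C (pcar A) (pcar B)" "pmap B \<cdot> k1 = pmap A"
   and k2: "k2 \<in> Hom C (pcar A) (pcar B)" "pmap B \<cdot> k2 = pmap A"
   and e: "bc_hom C Y Z g A B k1 = bc_hom C Y Z g A B k2"
  shows "k1 = k2"
proof -
  obtain tb where tb: "tb \<in> Hom C (pcar A) (PA A)" "qA A \<cdot> tb = t \<cdot> pmap A" "rA A \<cdot> tb = ide C (pcar A)"
    using tb_ex[OF A] by blast
  note u1 = bc_hom_props[OF A B k1] and u2 = bc_hom_props[OF B B] and u2 = bc_hom_props[OF A B k2]
  note dB = pbD[OF bc_pb[OF B]] and dA = pbD[OF bc_pb[OF A]]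
  have "k1 = (k1 \<cdot> rA A) \<cdot> tb" using assoc[OF tb(1) dA(4) k1(1)] tb id_r[OF k1(1)] by simp
  also have "\<dots> = (rA B \<cdot> bc_hom C Y Z g A B k2) \<cdot> tb" using u1 e by simp
  also have "\<dots> = k2" using u2 assoc[OF tb(1) dA(4) k2(1)] tb id_r[OF k2(1)] by simp
  finally show ?thesis .
qed

lemma bc_mono:
  assumes m: "pt_mono C Z A B m"
  shows "pt_mono C Y (bc_ob C Y Z g A) (bc_ob C Y Z g B) (bc_hom C Y Z g A B m)"
proof -
  have mh: "m \<in> pt_hom C Z A B" using m unfolding pt_mono_def by blast
  note md = pt_homD[OF mh]
  have A: "pt_ob C Z A" and B: "pt_ob C Z B" and mH: "m \<in> Hom C (pcar A) (pcar B)"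
    and fm: "pmap B \<cdot> m = pmap A" using md by auto
  have mm: "mono C (pcar A) (pcar B) m" by (rule pt_mono_mono[OF m])
  note u = bc_hom_props[OF A B mH fm]
  note dB = pbD[OF bc_pb[OF B]] and pA = bc_pb[OF A] note dA = pbD[OF pA]
  have "mono C (PA A) (PA B) (bc_hom C Y Z g A B m)" unfolding mono_def
  proof (intro conjI allI impI)
    show "bc_hom C Y Z g A B m \<in> Hom C (PA A) (PA B)" by (rule u(1))
    fix W x y assume x: "x \<in> Hom C W (PA A)" and y: "y \<in> Hom C W (PA A)"
      and e: "bc_hom C Y Z g A B m \<cdot> x = bc_hom C Y Z g A B m \<cdot> y"
    have e1: "qA A \<cdot> x = qA A \<cdot> y" using assoc[OF x u(1) dB(3)] assoc[OF y u(1) dB(3)] u e by metis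
    have "m \<cdot> (rA A \<cdot> x) = m \<cdot> (rA A \<cdot> y)"
      using assoc[OF x u(1) dB(4)] assoc[OF y u(1) dB(4)] u e assoc[OF x dA(4) mH] assoc[OF y dA(4) mH] by metis
    then have e2: "rA A \<cdot> x = rA A \<cdot> y" using mono_cancel[OF mm] comp_hom x y dA by blast
    show "x = y" using pb_uniq[OF pA x y e1 e2] .
  qed
  then show ?thesis using mono_pt_mono bc_pt_hom[OF mh] by simp
qed

end


locale bcs = bcl +
  fixes Sig :: "'a \<Rightarrow> 'a \<Rightarrow> 'b \<Rightarrow> 'b \<Rightarrow> bool"
  assumes fib: "fibrational C Sig" and mal: "sigma_maltsev C Sig"
begin

lemma jee_A:
  assumes A: "pt_ob C Z A" and S: "sig_ob Sig Z A"
    and tb: "tb \<in> Hom C (pcar A) (PA A)" "qA A \<cdot> tb = t \<cdot> pmap A" "rA A \<cdot> tb = ide C (pcar A)"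
  shows "jointly_ext_epic C Y (pcar A) (PA A) (sA A) tb"
  using mal[unfolded sigma_maltsev_def] S[unfolded sig_ob_def] se bc_pb[OF A] sA_props[OF A] tb by blast

lemma bc_full:
  assumes A: "pt_ob C Z A" and S: "sig_ob Sig Z A" and B: "pt_ob C Z B"
   and h: "h \<in> pt_hom C Y (bc_ob C Y Z g A) (bc_ob C Y Z g B)"
  shows "\<exists>k\<in>pt_hom C Z A B. bc_hom C Y Z g A B k = h"
proof -
  obtain tb where tb: "tb \<in> Hom C (pcar A) (PA A)" "qA A \<cdot> tb = t \<cdot> pmap A" "rA A \<cdot> tb = ide C (pcar A)"
     "tb \<cdot> psec A = sA A \<cdot> t"
    using tb_ex[OF A] by blast
  note j = jee_A[OF A S tb(1-3)]
  note hd = pt_homD[OF h]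
  have hH: "h \<in> Hom C (PA A) (PA B)" and hq: "qA B \<cdot> h = qA A" and hs: "h \<cdot> sA A = sA B" using hd by auto
  note pB = bc_pb[OF B] note dB = pbD[OF pB] and dA = pbD[OF bc_pb[OF A]]
  note a = pt_obD[OF A] and b = pt_obD[OF B]
  note sa = sA_props[OF A] and sb = sA_props[OF B]
  have fA: "pmap A \<in> Hom C (pcar A) Z" and sAH: "psec A \<in> Hom C Z (pcar A)" using a by auto
  have fB: "pmap B \<in> Hom C (pcar B) Z" and sBH: "psec B \<in> Hom C Z (pcar B)" using b by auto
  define k where "k = rA B \<cdot> (h \<cdot> tb)"
  have htb: "h \<cdot> tb \<in> Hom C (pcar A) (PA B)" using comp_hom hH tb by blast
  have kH: "k \<in> Hom C (pcar A) (pcar B)" unfolding k_def using comp_hom htb dB by blast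
  have fk: "pmap B \<cdot> k = pmap A"
  proof -
    have "pmap B \<cdot> k = (pmap B \<cdot> rA B) \<cdot> (h \<cdot> tb)" unfolding k_def using assoc[OF htb dB(4) fB] by simp
    also have "\<dots> = g \<cdot> (qA B \<cdot> (h \<cdot> tb))" using dB(5) assoc[OF htb dB(3) gH] by simp
    also have "\<dots> = g \<cdot> (t \<cdot> pmap A)" using assoc[OF tb(1) hH dB(3)] hq tb by simp
    also have "\<dots> = pmap A" using assoc[OF fA tH gH] gt id_l[OF fA] by simp
    finally show ?thesis .
  qed
  have ks: "k \<cdot> psec A = psec B"
  proof -
    have "k \<cdot> psec A = rA B \<cdot> (h \<cdot> (tb \<cdot> psec A))"
      unfolding k_def using assoc[OF sAH htb dB(4)] assoc[OF sAH tb(1) hH] by simp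
    also have "\<dots> = rA B \<cdot> ((h \<cdot> sA A) \<cdot> t)" using tb assoc[OF tH sa(1) hH] by simp
    also have "\<dots> = (rA B \<cdot> sA B) \<cdot> t" using hs assoc[OF tH sb(1) dB(4)] by simp
    also have "\<dots> = psec B" using sb assoc[OF tH gH sBH] gt id_r[OF sBH] by simp
    finally show ?thesis .
  qed
  have kh: "k \<in> pt_hom C Z A B" using A B kH fk ks by (rule pt_homI)
  note u = bc_hom_props[OF A B kH fk]
  note uh = pt_homD[OF bc_pt_hom[OF kh]]
  define h' where "h' = bc_hom C Y Z g A B k"
  note u = u[folded h'_def] and uh = uh[folded h'_def]
  have "h = h'"
  proof (rule jee_eq[OF j hH u(1) dB(3)])
    show "qA B \<cdot> h = qA B \<cdot> h'" using hq u by simp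
    show "h \<cdot> sA A = h' \<cdot> sA A" using hs uh by simp
    show "h \<cdot> tb = h' \<cdot> tb"
    proof (rule pb_uniq[OF pB htb])
      show "h' \<cdot> tb \<in> Hom C (pcar A) (PA B)" using comp_hom u tb by blast
      show "qA B \<cdot> h \<cdot> tb = qA B \<cdot> h' \<cdot> tb"
        using assoc[OF tb(1) hH dB(3)] assoc[OF tb(1) u(1) dB(3)] hq u by simp
      show "rA B \<cdot> h \<cdot> tb = rA B \<cdot> h' \<cdot> tb"
        using assoc[OF tb(1) u(1) dB(4)] u assoc[OF tb(1) dA(4) kH] tb id_r[OF kH] k_def by simp
    qed
  qed
  then show ?thesis using kh h'_def by blast
qed

lemma bc_ff:
  assumes A: "pt_ob C Z A" and S: "sig_ob Sig Z A" and B: "pt_ob C Z B"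
   and h: "h \<in> pt_hom C Y (bc_ob C Y Z g A) (bc_ob C Y Z g B)"
  shows "\<exists>!k. k \<in> pt_hom C Z A B \<and> bc_hom C Y Z g A B k = h"
proof -
  obtain k where k: "k \<in> pt_hom C Z A B" "bc_hom C Y Z g A B k = h" using bc_full[OF assms] by blast
  show ?thesis
  proof (rule ex1I[of _ k])
    show "k \<in> pt_hom C Z A B \<and> bc_hom C Y Z g A B k = h" using k by blast
    fix k' assume k': "k' \<in> pt_hom C Z A B \<and> bc_hom C Y Z g A B k' = h"
    show "k' = k" using bc_faithful[OF A B] pt_homD k k' by metis
  qed
qed

end

context fcat begin

lemma pt_hom_comp: "u \<in> pt_hom C Y0 A B \<Longrightarrow> v \<in> pt_hom C Y0 B D \<Longrightarrow> v \<cdot> u \<in> pt_hom C Y0 A D"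
proof -
  assume u: "u \<in> pt_hom C Y0 A B" and v: "v \<in> pt_hom C Y0 B D"
  note ud = pt_homD[OF u] and vd = pt_homD[OF v]
  note a = pt_obD[OF conjunct1[OF ud]] and b = pt_obD[OF conjunct1[OF vd]]
    and d = pt_obD[OF conjunct1[OF conjunct2[OF vd]]]
  have uH: "u \<in> Hom C (pcar A) (pcar B)" and vH: "v \<in> Hom C (pcar B) (pcar D)" using ud vd by auto
  show ?thesis
  proof (rule pt_homI)
    show "pt_ob C Y0 A" "pt_ob C Y0 D" using ud vd by auto
    show "v \<cdot> u \<in> Hom C (pcar A) (pcar D)" using comp_hom uH vH by blast
    show "pmap D \<cdot> v \<cdot> u = pmap A" using assoc[OF uH vH conjunct1[OF d]] ud vd by simp
    show "(v \<cdot> u) \<cdot> psec A = psec D" using assoc[OF conjunct1[OF conjunct2[OF a]] uH vH] ud vd by simp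
  qed
qed

lemma pt_hom_id: "pt_ob C Y0 A \<Longrightarrow> ide C (pcar A) \<in> pt_hom C Y0 A A"
proof -
  assume A: "pt_ob C Y0 A"
  note a = pt_obD[OF A]
  have fA: "pmap A \<in> Hom C (pcar A) Y0" and sAH: "psec A \<in> Hom C Y0 (pcar A)" using a by auto
  show ?thesis using A id_hom1[OF fA] id_r[OF fA] id_l[OF sAH] by (intro pt_homI) auto
qed

lemma pt_iso_comp: "pt_iso C Y0 A B u \<Longrightarrow> pt_iso C Y0 B D v \<Longrightarrow> pt_iso C Y0 A D (v \<cdot> u)"
proof -
  assume u: "pt_iso C Y0 A B u" and v: "pt_iso C Y0 B D v"
  obtain u' where u': "u' \<in> pt_hom C Y0 B A" "u' \<cdot> u = ide C (pcar A)" "u \<cdot> u' = ide C (pcar B)"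
    and uh: "u \<in> pt_hom C Y0 A B" using u unfolding pt_iso_def by blast
  obtain v' where v': "v' \<in> pt_hom C Y0 D B" "v' \<cdot> v = ide C (pcar B)" "v \<cdot> v' = ide C (pcar D)"
    and vh: "v \<in> pt_hom C Y0 B D" using v unfolding pt_iso_def by blast
  have uH: "u \<in> Hom C (pcar A) (pcar B)" and vH: "v \<in> Hom C (pcar B) (pcar D)"
   and u'H: "u' \<in> Hom C (pcar B) (pcar A)" and v'H: "v' \<in> Hom C (pcar D) (pcar B)"
    using pt_homD uh vh u' v' by auto
  have "(u' \<cdot> v') \<cdot> (v \<cdot> u) = u' \<cdot> ((v' \<cdot> v) \<cdot> u)"
    using assoc[OF comp_hom[OF uH vH] v'H u'H] assoc[OF uH vH v'H] by simp
  also have "\<dots> = ide C (pcar A)" using v' id_l[OF uH] u' by simp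
  finally have e1: "(u' \<cdot> v') \<cdot> (v \<cdot> u) = ide C (pcar A)" .
  have "(v \<cdot> u) \<cdot> (u' \<cdot> v') = v \<cdot> ((u \<cdot> u') \<cdot> v')"
    using assoc[OF comp_hom[OF v'H u'H] uH vH] assoc[OF v'H u'H uH] by simp
  also have "\<dots> = ide C (pcar D)" using u' id_l[OF v'H] v' by simp
  finally have e2: "(v \<cdot> u) \<cdot> (u' \<cdot> v') = ide C (pcar D)" .
  show ?thesis unfolding pt_iso_def using pt_hom_comp uh vh u' v' e1 e2 by blast
qed

lemma subrepD: "r \<in> subrep C Y0 S B \<Longrightarrow> pt_ob C Y0 (fst r) \<and> S (fst r) \<and> pt_mono C Y0 (fst r) B (snd r)"
  unfolding subrep_def by auto

lemma subrep_hom: "r \<in> subrep C Y0 S B \<Longrightarrow> snd r \<in> pt_hom C Y0 (fst r) B"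
  using subrepD unfolding pt_mono_def by blast

lemma sub_refl: "r \<in> subrep C Y0 S B \<Longrightarrow> sub_equiv C Y0 r r"
proof -
  assume r: "r \<in> subrep C Y0 S B"
  note rd = subrepD[OF r] and rh = pt_homD[OF subrep_hom[OF r]]
  have i: "ide C (pcar (fst r)) \<in> pt_hom C Y0 (fst r) (fst r)" using pt_hom_id rd by blast
  have "ide C (pcar (fst r)) \<cdot> ide C (pcar (fst r)) = ide C (pcar (fst r))"
    using pt_homD[OF i] id_l by blast
  then have "pt_iso C Y0 (fst r) (fst r) (ide C (pcar (fst r)))" unfolding pt_iso_def using i by blast
  moreover have "snd r \<cdot> ide C (pcar (fst r)) = snd r" using rh id_r by blast
  ultimately show ?thesis unfolding sub_equiv_def by blast
qed

lemma sub_sym: "r' \<in> subrep C Y0 S B \<Longrightarrow> sub_equiv C Y0 r r' \<Longrightarrow> sub_equiv C Y0 r' r"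
proof -
  assume r': "r' \<in> subrep C Y0 S B" and e: "sub_equiv C Y0 r r'"
  obtain u where u: "pt_iso C Y0 (fst r) (fst r') u" "snd r' \<cdot> u = snd r" using e unfolding sub_equiv_def by blast
  obtain w where w: "w \<in> pt_hom C Y0 (fst r') (fst r)" "w \<cdot> u = ide C (pcar (fst r))" "u \<cdot> w = ide C (pcar (fst r'))"
    and uh: "u \<in> pt_hom C Y0 (fst r) (fst r')" using u unfolding pt_iso_def by blast
  have iso: "pt_iso C Y0 (fst r') (fst r) w" unfolding pt_iso_def using w uh by blast
  have mH: "snd r' \<in> Hom C (pcar (fst r')) (pcar B)" using pt_homD[OF subrep_hom[OF r']] by blast
  have wH: "w \<in> Hom C (pcar (fst r')) (pcar (fst r))" and uH: "u \<in> Hom C (pcar (fst r)) (pcar (fst r'))"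
    using pt_homD w uh by auto
  have "snd r \<cdot> w = snd r'" using u(2)[symmetric] assoc[OF wH uH mH] w id_r[OF mH] by simp
  then show ?thesis unfolding sub_equiv_def using iso by blast
qed

lemma sub_trans: "r3 \<in> subrep C Y0 S B \<Longrightarrow> sub_equiv C Y0 r1 r2 \<Longrightarrow> sub_equiv C Y0 r2 r3 \<Longrightarrow> sub_equiv C Y0 r1 r3"
proof -
  assume r3: "r3 \<in> subrep C Y0 S B" and e1: "sub_equiv C Y0 r1 r2" and e2: "sub_equiv C Y0 r2 r3"
  obtain u where u: "pt_iso C Y0 (fst r1) (fst r2) u" "snd r2 \<cdot> u = snd r1" using e1 unfolding sub_equiv_def by blast
  obtain v where v: "pt_iso C Y0 (fst r2) (fst r3) v" "snd r3 \<cdot> v = snd r2" using e2 unfolding sub_equiv_def by blast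
  have mH: "snd r3 \<in> Hom C (pcar (fst r3)) (pcar B)" using pt_homD[OF subrep_hom[OF r3]] by blast
  have uH: "u \<in> Hom C (pcar (fst r1)) (pcar (fst r2))" and vH: "v \<in> Hom C (pcar (fst r2)) (pcar (fst r3))"
    using u(1) v(1) unfolding pt_iso_def pt_hom_def by auto
  have "snd r3 \<cdot> (v \<cdot> u) = snd r1" using assoc[OF uH vH mH] u v by simp
  then show ?thesis unfolding sub_equiv_def using pt_iso_comp[OF u(1) v(1)] by blast
qed

definition cls where "cls Y0 S B r = {r' \<in> subrep C Y0 S B. sub_equiv C Y0 r' r}"

lemma subobjects_cls: "subobjects C Y0 S B = cls Y0 S B ` subrep C Y0 S B"
  unfolding subobjects_def cls_def by simp

lemma cls_eq: "r1 \<in> subrep C Y0 S B \<Longrightarrow> r2 \<in> subrep C Y0 S B \<Longrightarrow>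
   cls Y0 S B r1 = cls Y0 S B r2 \<longleftrightarrow> sub_equiv C Y0 r1 r2"
proof
  assume r1: "r1 \<in> subrep C Y0 S B" and r2: "r2 \<in> subrep C Y0 S B"
  {assume "cls Y0 S B r1 = cls Y0 S B r2"
    moreover have "r1 \<in> cls Y0 S B r1" unfolding cls_def using r1 sub_refl[OF r1] by blast
    ultimately show "sub_equiv C Y0 r1 r2" unfolding cls_def by blast}
  {assume e: "sub_equiv C Y0 r1 r2"
    have e': "sub_equiv C Y0 r2 r1" using sub_sym[OF r2 e] .
    show "cls Y0 S B r1 = cls Y0 S B r2" unfolding cls_def using sub_trans[OF r1 _ e'] sub_trans[OF r2 _ e] by blast}
qed

end

context bcs begin

lemma bc_sig: "pt_ob C Z A \<Longrightarrow> sig_ob Sig Z A \<Longrightarrow> sig_ob Sig Y (bc_ob C Y Z g A)"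
proof -
  assume A: "pt_ob C Z A" and S: "sig_ob Sig Z A"
  have f3: "\<And>X Y f s Y' v X' f' v' s'. Sig X Y f s \<Longrightarrow> v \<in> Hom C Y' Y \<Longrightarrow>
       is_pullback C Y' X Y v f X' f' v' \<Longrightarrow> s' \<in> Hom C Y' X' \<Longrightarrow>
       f' \<cdot> s' = ide C Y' \<Longrightarrow> v' \<cdot> s' = s \<cdot> v \<Longrightarrow> Sig X' Y' f' s'"
    using fib unfolding fibrational_def by blast
  note sa = sA_props[OF A]
  have "Sig (PA A) Y (qA A) (sA A)"
    by (rule f3[OF S[unfolded sig_ob_def] gH bc_pb[OF A] sa(1) sa(2) sa(3)])
  then show ?thesis unfolding sig_ob_def by simp
qed

lemma bcr_sub: "(A, m) \<in> subrep C Z (sig_ob Sig Z) B \<Longrightarrow>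
  (bc_ob C Y Z g A, bc_hom C Y Z g A B m) \<in> subrep C Y (sig_ob Sig Y) (bc_ob C Y Z g B)"
  using subrepD[of "(A,m)"] bc_sig bc_pt bc_mono unfolding subrep_def by auto

lemma pt_isoD: "pt_iso C Y0 A B u \<Longrightarrow> \<exists>w\<in>pt_hom C Y0 B A. u \<in> pt_hom C Y0 A B \<and> w \<cdot> u = ide C (pcar A) \<and> u \<cdot> w = ide C (pcar B)"
  unfolding pt_iso_def by blast

lemma bc_iso: assumes u: "pt_iso C Z A A' u" shows "pt_iso C Y (bc_ob C Y Z g A) (bc_ob C Y Z g A') (bc_hom C Y Z g A A' u)"
proof -
  obtain w where w: "w \<in> pt_hom C Z A' A" "u \<in> pt_hom C Z A A'" "w \<cdot> u = ide C (pcar A)" "u \<cdot> w = ide C (pcar A')"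
    using pt_isoD[OF u] by blast
  note wd = pt_homD[OF w(1)] and ud = pt_homD[OF w(2)]
  have A: "pt_ob C Z A" and A': "pt_ob C Z A'" using ud by auto
  have e1: "bc_hom C Y Z g A' A w \<cdot> bc_hom C Y Z g A A' u = ide C (PA A)"
    using bc_comp[OF A A' A, of u w] wd ud w bc_id[OF A] by simp
  have e2: "bc_hom C Y Z g A A' u \<cdot> bc_hom C Y Z g A' A w = ide C (PA A')"
    using bc_comp[OF A' A A', of w u] wd ud w bc_id[OF A'] by simp
  show ?thesis unfolding pt_iso_def using bc_pt_hom[OF w(1)] bc_pt_hom[OF w(2)] e1 e2 by auto
qed

lemma bc_equiv:
  assumes r: "(A, m) \<in> subrep C Z (sig_ob Sig Z) B" and r': "(A', m') \<in> subrep C Z (sig_ob Sig Z) B"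
    and e: "sub_equiv C Z (A', m') (A, m)"
  shows "sub_equiv C Y (bc_ob C Y Z g A', bc_hom C Y Z g A' B m') (bc_ob C Y Z g A, bc_hom C Y Z g A B m)"
proof -
  obtain u where u: "pt_iso C Z A' A u" "m \<cdot> u = m'" using e unfolding sub_equiv_def by auto
  have uh: "u \<in> pt_hom C Z A' A" using u unfolding pt_iso_def by blast
  note ud = pt_homD[OF uh] and md = pt_homD[OF subrep_hom[OF r, simplified]]
  have "bc_hom C Y Z g A B m \<cdot> bc_hom C Y Z g A' A u = bc_hom C Y Z g A' B m'"
    using bc_comp[of A' A B u m] ud md u(2) by simp
  then show ?thesis unfolding sub_equiv_def using bc_iso[OF u(1)] by auto
qed

lemma bc_reflect:
  assumes r1: "(A1, m1) \<in> subrep C Z (sig_ob Sig Z) B" and r2: "(A2, m2) \<in> subrep C Z (sig_ob Sig Z) B"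
    and e: "sub_equiv C Y (bc_ob C Y Z g A1, bc_hom C Y Z g A1 B m1) (bc_ob C Y Z g A2, bc_hom C Y Z g A2 B m2)"
  shows "sub_equiv C Z (A1, m1) (A2, m2)"
proof -
  note s1 = subrepD[OF r1, simplified] and s2 = subrepD[OF r2, simplified]
  note m1 = pt_homD[OF subrep_hom[OF r1, simplified]] and m2 = pt_homD[OF subrep_hom[OF r2, simplified]]
  have A1: "pt_ob C Z A1" and A2: "pt_ob C Z A2" and B: "pt_ob C Z B" using s1 s2 m1 by auto
  obtain h where h: "pt_iso C Y (bc_ob C Y Z g A1) (bc_ob C Y Z g A2) h"
     "bc_hom C Y Z g A2 B m2 \<cdot> h = bc_hom C Y Z g A1 B m1" using e unfolding sub_equiv_def by auto
  obtain h' where h': "h' \<in> pt_hom C Y (bc_ob C Y Z g A2) (bc_ob C Y Z g A1)" "h \<in> pt_hom C Y (bc_ob C Y Z g A1) (bc_ob C Y Z g A2)"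
    "h' \<cdot> h = ide C (PA A1)" "h \<cdot> h' = ide C (PA A2)" using pt_isoD[OF h(1)] by auto
  obtain k where k: "k \<in> pt_hom C Z A1 A2" "bc_hom C Y Z g A1 A2 k = h" using bc_full[OF A1 _ A2 h'(2)] s1 by blast
  obtain k' where k': "k' \<in> pt_hom C Z A2 A1" "bc_hom C Y Z g A2 A1 k' = h'" using bc_full[OF A2 _ A1 h'(1)] s2 by blast
  note kd = pt_homD[OF k(1)] and k'd = pt_homD[OF k'(1)]
  have i1: "ide C (pcar A1) \<in> pt_hom C Z A1 A1" and i2: "ide C (pcar A2) \<in> pt_hom C Z A2 A2"
    using pt_hom_id A1 A2 by auto
  note i1d = pt_homD[OF i1] and i2d = pt_homD[OF i2]
  note kk = pt_homD[OF pt_hom_comp[OF k(1) k'(1)]] and kk' = pt_homD[OF pt_hom_comp[OF k'(1) k(1)]]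
  have "k' \<cdot> k = ide C (pcar A1)"
    using bc_faithful[OF A1 A1, of "k' \<cdot> k" "ide C (pcar A1)"] kk i1d bc_comp[OF A1 A2 A1, of k k'] kd k'd k k' h' bc_id[OF A1]
    by simp
  moreover have "k \<cdot> k' = ide C (pcar A2)"
    using bc_faithful[OF A2 A2, of "k \<cdot> k'" "ide C (pcar A2)"] kk' i2d bc_comp[OF A2 A1 A2, of k' k] kd k'd k k' h' bc_id[OF A2]
    by simp
  moreover have "m2 \<cdot> k = m1"
    using bc_faithful[OF A1 B, of "m2 \<cdot> k" m1] pt_homD[OF pt_hom_comp[OF k(1) subrep_hom[OF r2, simplified]]]
      m1 bc_comp[OF A1 A2 B, of k m2] kd m2 k h(2) by simp
  ultimately show ?thesis unfolding sub_equiv_def pt_iso_def using k k' by auto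
qed

end

context bcs begin

lemma mal_key:
  assumes B: "pt_ob C Z B" and D: "pt_ob C Y D" and S: "Sig (pcar D) Y (pmap D) (psec D)"
   and n: "n \<in> Hom C (pcar D) (PA B)" and nm: "mono C (pcar D) (PA B) n"
   and nq: "qA B \<cdot> n = pmap D" and ns: "n \<cdot> psec D = sA B"
   and y1: "y1 \<in> Hom C Q Y" and w: "w \<in> Hom C Q (pcar D)" and e: "g \<cdot> y1 = g \<cdot> (pmap D \<cdot> w)"
  shows "\<exists>w0\<in>Hom C Q (pcar D). qA B \<cdot> (n \<cdot> w0) = y1 \<and> rA B \<cdot> (n \<cdot> w0) = rA B \<cdot> (n \<cdot> w)"
proof -
  define W where "W = pcar D"
  define d where "d = pmap D"
  define \<sigma> where "\<sigma> = psec D"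
  note dd = pt_obD[OF D, folded W_def d_def \<sigma>_def]
  have dH: "d \<in> Hom C W Y" and sgH: "\<sigma> \<in> Hom C Y W" and ds: "d \<cdot> \<sigma> = ide C Y" using dd by auto
  note n = n[folded W_def] and nm = nm[folded W_def] and nq = nq[folded d_def] and ns = ns[folded \<sigma>_def]
  note w = w[folded W_def] and e = e[folded d_def] and S = S[folded W_def d_def \<sigma>_def]
  note pB = bc_pb[OF B] note dB = pbD[OF pB]
  note b = pt_obD[OF B] note sb = sA_props[OF B]
  have fB: "pmap B \<in> Hom C (pcar B) Z" using b by blast
  obtain R \<pi>1 \<pi>2 where pR: "is_pullback C Y Y Z g g R \<pi>1 \<pi>2" using pb_exists gH by blast
  note dR = pbD[OF pR]
  obtain \<delta> where de: "\<delta> \<in> Hom C Y R" "\<pi>1 \<cdot> \<delta> = ide C Y" "\<pi>2 \<cdot> \<delta> = ide C Y"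
    using pb_ex[OF pR iY iY] by blast
  have seR: "split_epi C R Y \<pi>2 \<delta>" unfolding split_epi_def using dR de by blast
  obtain X' p1 p2 where pX: "is_pullback C R W Y \<pi>2 d X' p1 p2" using pb_exists dR dH by blast
  note dX = pbD[OF pX]
  have iR: "ide C R \<in> Hom C R R" using id_hom1[OF dR(3)] .
  have iW: "ide C W \<in> Hom C W W" using id_hom1[OF dH] .
  have sp: "\<sigma> \<cdot> \<pi>2 \<in> Hom C R W" using comp_hom dR sgH by blast
  have "\<pi>2 \<cdot> ide C R = d \<cdot> (\<sigma> \<cdot> \<pi>2)" using id_r[OF dR(4)] assoc[OF dR(4) sgH dH] ds id_l[OF dR(4)] by simp
  then obtain s' where s': "s' \<in> Hom C R X'" "p1 \<cdot> s' = ide C R" "p2 \<cdot> s' = \<sigma> \<cdot> \<pi>2"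
    using pb_ex[OF pX iR sp] by blast
  have dd': "\<delta> \<cdot> d \<in> Hom C W R" using comp_hom dH de by blast
  have "\<pi>2 \<cdot> (\<delta> \<cdot> d) = d \<cdot> ide C W" using assoc[OF dH de(1) dR(4)] de id_l[OF dH] id_r[OF dH] by simp
  then obtain tb where tb: "tb \<in> Hom C W X'" "p1 \<cdot> tb = \<delta> \<cdot> d" "p2 \<cdot> tb = ide C W"
    using pb_ex[OF pX dd' iW] by blast
  have j: "jointly_ext_epic C R W X' s' tb"
    using mal[unfolded sigma_maltsev_def] S seR pX s' tb by blast
  have pp: "\<pi>1 \<cdot> p1 \<in> Hom C X' Y" using comp_hom dX dR by blast
  have np2: "n \<cdot> p2 \<in> Hom C X' (PA B)" using comp_hom dX n by blast
  have rnp: "rA B \<cdot> (n \<cdot> p2) \<in> Hom C X' (pcar B)" using comp_hom np2 dB by blast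
  have gpi: "g \<cdot> \<pi>1 = g \<cdot> \<pi>2" using dR by simp
  have "g \<cdot> (\<pi>1 \<cdot> p1) = pmap B \<cdot> (rA B \<cdot> (n \<cdot> p2))"
  proof -
    have "g \<cdot> (\<pi>1 \<cdot> p1) = g \<cdot> (\<pi>2 \<cdot> p1)" using assoc[OF dX(3) dR(3) gH] assoc[OF dX(3) dR(4) gH] gpi by simp
    also have "\<dots> = g \<cdot> (qA B \<cdot> (n \<cdot> p2))" using dX(5) nq assoc[OF dX(4) n dB(3)] by simp
    also have "\<dots> = pmap B \<cdot> (rA B \<cdot> (n \<cdot> p2))" using assoc[OF np2 dB(3) gH] assoc[OF np2 dB(4) fB] dB(5) by simp
    finally show ?thesis .
  qed
  then obtain \<theta> where th: "\<theta> \<in> Hom C X' (PA B)" "qA B \<cdot> \<theta> = \<pi>1 \<cdot> p1" "rA B \<cdot> \<theta> = rA B \<cdot> (n \<cdot> p2)"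
    using pb_ex[OF pB pp rnp] by blast
  have sp1: "\<sigma> \<cdot> \<pi>1 \<in> Hom C R W" using comp_hom dR sgH by blast
  have e1: "\<theta> \<cdot> s' = n \<cdot> (\<sigma> \<cdot> \<pi>1)"
  proof (rule pb_uniq[OF pB])
    show "\<theta> \<cdot> s' \<in> Hom C R (PA B)" using comp_hom th s' by blast
    show "n \<cdot> (\<sigma> \<cdot> \<pi>1) \<in> Hom C R (PA B)" using comp_hom n sp1 by blast
    have "qA B \<cdot> (\<theta> \<cdot> s') = \<pi>1" using assoc[OF s'(1) th(1) dB(3)] th assoc[OF s'(1) dX(3) dR(3)] s' id_r[OF dR(3)] by simp
    moreover have "qA B \<cdot> (n \<cdot> (\<sigma> \<cdot> \<pi>1)) = \<pi>1" using assoc[OF sp1 n dB(3)] nq assoc[OF dR(3) sgH dH] ds id_l[OF dR(3)] by simp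
    ultimately show "qA B \<cdot> \<theta> \<cdot> s' = qA B \<cdot> n \<cdot> \<sigma> \<cdot> \<pi>1" by simp
    have sBH: "psec B \<in> Hom C Z (pcar B)" using b by blast
    have "rA B \<cdot> (\<theta> \<cdot> s') = rA B \<cdot> (n \<cdot> (\<sigma> \<cdot> \<pi>2))"
      using assoc[OF s'(1) th(1) dB(4)] th assoc[OF s'(1) np2 dB(4)] assoc[OF s'(1) dX(4) n] s' by simp
    also have "\<dots> = (rA B \<cdot> sA B) \<cdot> \<pi>2" using assoc[OF dR(4) sgH n] ns assoc[OF dR(4) sb(1) dB(4)] by simp
    also have "\<dots> = psec B \<cdot> (g \<cdot> \<pi>2)" using sb assoc[OF dR(4) gH sBH] by simp
    also have "\<dots> = (rA B \<cdot> sA B) \<cdot> \<pi>1" using sb assoc[OF dR(3) gH sBH] gpi by simp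
    also have "\<dots> = rA B \<cdot> (n \<cdot> (\<sigma> \<cdot> \<pi>1))" using assoc[OF dR(3) sgH n] ns assoc[OF dR(3) sb(1) dB(4)] by simp
    finally show "rA B \<cdot> \<theta> \<cdot> s' = rA B \<cdot> n \<cdot> \<sigma> \<cdot> \<pi>1" .
  qed
  have e2: "\<theta> \<cdot> tb = n \<cdot> ide C W"
  proof (rule pb_uniq[OF pB])
    show "\<theta> \<cdot> tb \<in> Hom C W (PA B)" using comp_hom th tb by blast
    show "n \<cdot> ide C W \<in> Hom C W (PA B)" using id_r[OF n] n by simp
    show "qA B \<cdot> \<theta> \<cdot> tb = qA B \<cdot> n \<cdot> ide C W"
      using assoc[OF tb(1) th(1) dB(3)] th assoc[OF tb(1) dX(3) dR(3)] tb assoc[OF dH de(1) dR(3)] de id_l[OF dH]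
        id_r[OF n] nq by simp
    show "rA B \<cdot> \<theta> \<cdot> tb = rA B \<cdot> n \<cdot> ide C W"
      using assoc[OF tb(1) th(1) dB(4)] th assoc[OF tb(1) np2 dB(4)] assoc[OF tb(1) dX(4) n] tb id_r[OF n] by simp
  qed
  obtain \<rho> where rho: "\<rho> \<in> Hom C X' W" "n \<cdot> \<rho> = \<theta>" using jee_factor[OF j nm th(1) sp1 iW e1 e2] by blast
  have dw: "d \<cdot> w \<in> Hom C Q Y" using comp_hom w dH by blast
  obtain \<zeta> where z: "\<zeta> \<in> Hom C Q R" "\<pi>1 \<cdot> \<zeta> = y1" "\<pi>2 \<cdot> \<zeta> = d \<cdot> w" using pb_ex[OF pR y1 dw e] by blast
  obtain \<xi> where x: "\<xi> \<in> Hom C Q X'" "p1 \<cdot> \<xi> = \<zeta>" "p2 \<cdot> \<xi> = w" using pb_ex[OF pX z(1) w] z by blast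
  have "qA B \<cdot> (n \<cdot> (\<rho> \<cdot> \<xi>)) = y1"
    using assoc[OF x(1) rho(1) n] rho assoc[OF x(1) th(1) dB(3)] th assoc[OF x(1) dX(3) dR(3)] x z by simp
  moreover have "rA B \<cdot> (n \<cdot> (\<rho> \<cdot> \<xi>)) = rA B \<cdot> (n \<cdot> w)"
    using assoc[OF x(1) rho(1) n] rho assoc[OF x(1) th(1) dB(4)] th assoc[OF x(1) np2 dB(4)] assoc[OF x(1) dX(4) n] x by simp
  ultimately show ?thesis using comp_hom[OF x(1) rho(1)] W_def by blast
qed

end

context bcs begin

lemma bc_surj:
  assumes B: "pt_ob C Z B" and r: "(D, n) \<in> subrep C Y (sig_ob Sig Y) (bc_ob C Y Z g B)"
  shows "\<exists>Ap a1. (Ap, a1) \<in> subrep C Z (sig_ob Sig Z) B \<and>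
            sub_equiv C Y (bc_ob C Y Z g Ap, bc_hom C Y Z g Ap B a1) (D, n)"
proof -
  note rd = subrepD[OF r, simplified] and nh = subrep_hom[OF r, simplified]
  have D: "pt_ob C Y D" and SD: "Sig (pcar D) Y (pmap D) (psec D)" using rd unfolding sig_ob_def by auto
  note nd = pt_homD[OF nh, simplified]
  have n: "n \<in> Hom C (pcar D) (PA B)" and nq: "qA B \<cdot> n = pmap D" and ns: "n \<cdot> psec D = sA B" using nd by auto
  have nm: "mono C (pcar D) (PA B) n" using pt_mono_mono[OF conjunct2[OF conjunct2[OF rd]]] by simp
  note key = mal_key[OF B D SD n nm nq ns]
  define W where "W = pcar D"
  define d where "d = pmap D"
  define \<sigma> where "\<sigma> = psec D"
  note dd = pt_obD[OF D, folded W_def d_def \<sigma>_def]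
  have dH: "d \<in> Hom C W Y" and sgH: "\<sigma> \<in> Hom C Y W" and ds: "d \<cdot> \<sigma> = ide C Y" using dd by auto
  note n = n[folded W_def] and nm = nm[folded W_def] and nq = nq[folded d_def] and ns = ns[folded \<sigma>_def]
  note key = key[folded W_def d_def]
  note pB = bc_pb[OF B] note dB = pbD[OF pB]
  note b = pt_obD[OF B] note sb = sA_props[OF B]
  have fB: "pmap B \<in> Hom C (pcar B) Z" and sBH: "psec B \<in> Hom C Z (pcar B)" using b by auto
  obtain tbB where tbB: "tbB \<in> Hom C (pcar B) (PA B)" "qA B \<cdot> tbB = t \<cdot> pmap B" "rA B \<cdot> tbB = ide C (pcar B)"
     "tbB \<cdot> psec B = sA B \<cdot> t" using tb_ex[OF B] by blast
  obtain A a1 a2 where pA: "is_pullback C (pcar B) W (PA B) tbB n A a1 a2" using pb_exists tbB n by blast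
  note dA = pbD[OF pA]
  have st: "\<sigma> \<cdot> t \<in> Hom C Z W" using comp_hom tH sgH by blast
  have "tbB \<cdot> psec B = n \<cdot> (\<sigma> \<cdot> t)" using tbB assoc[OF tH sgH n] ns by simp
  then obtain sAp where sAp: "sAp \<in> Hom C Z A" "a1 \<cdot> sAp = psec B" "a2 \<cdot> sAp = \<sigma> \<cdot> t"
    using pb_ex[OF pA sBH st] by blast
  define Ap where "Ap = (A, pmap B \<cdot> a1, sAp)"
  have fa: "pmap B \<cdot> a1 \<in> Hom C A Z" using comp_hom dA fB by blast
  have fas: "(pmap B \<cdot> a1) \<cdot> sAp = ide C Z" using assoc[OF sAp(1) dA(3) fB] sAp b by simp
  have Ap: "pt_ob C Z Ap" unfolding Ap_def pt_ob_def split_epi_def using fa sAp fas by simp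
  have rn: "rA B \<cdot> n \<in> Hom C W (pcar B)" using comp_hom n dB by blast
  have tbrn: "tbB \<cdot> (rA B \<cdot> (n \<cdot> x)) = n \<cdot> x" if x: "x \<in> Hom C Q W" and ex: "d \<cdot> x = t \<cdot> (g \<cdot> (d \<cdot> x))" for x Q
  proof (rule pb_uniq[OF pB])
    have nx: "n \<cdot> x \<in> Hom C Q (PA B)" using comp_hom x n by blast
    have rnx: "rA B \<cdot> (n \<cdot> x) \<in> Hom C Q (pcar B)" using comp_hom nx dB by blast
    show "tbB \<cdot> rA B \<cdot> n \<cdot> x \<in> Hom C Q (PA B)" using comp_hom rnx tbB by blast
    show "n \<cdot> x \<in> Hom C Q (PA B)" by (rule nx)
    have "qA B \<cdot> (tbB \<cdot> (rA B \<cdot> (n \<cdot> x))) = t \<cdot> (pmap B \<cdot> (rA B \<cdot> (n \<cdot> x)))"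
      using assoc[OF rnx tbB(1) dB(3)] tbB assoc[OF rnx fB tH] by simp
    also have "\<dots> = t \<cdot> (g \<cdot> (qA B \<cdot> (n \<cdot> x)))" using assoc[OF nx dB(4) fB] assoc[OF nx dB(3) gH] dB(5) by simp
    also have "\<dots> = qA B \<cdot> (n \<cdot> x)" using assoc[OF x n dB(3)] nq ex by simp
    finally show "qA B \<cdot> tbB \<cdot> rA B \<cdot> n \<cdot> x = qA B \<cdot> n \<cdot> x" .
    show "rA B \<cdot> tbB \<cdot> rA B \<cdot> n \<cdot> x = rA B \<cdot> n \<cdot> x" using assoc[OF rnx tbB(1) dB(4)] tbB id_l[OF rnx] by simp
  qed
  have da2: "d \<cdot> a2 = t \<cdot> (pmap B \<cdot> a1)"
    using nq assoc[OF dA(4) n dB(3)] dA(5)[symmetric] assoc[OF dA(3) tbB(1) dB(3)] tbB assoc[OF dA(3) fB tH] by simp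
  have pbA: "is_pullback C Z W Y t d A (pmap B \<cdot> a1) a2"
    unfolding is_pullback_def
  proof (intro conjI allI impI)
    show "t \<in> Hom C Z Y" "d \<in> Hom C W Y" "pmap B \<cdot> a1 \<in> Hom C A Z" "a2 \<in> Hom C A W" using tH dH fa dA by auto
    show "t \<cdot> pmap B \<cdot> a1 = d \<cdot> a2" using da2 by simp
    fix Q z w assume z: "z \<in> Hom C Q Z" and w: "w \<in> Hom C Q W" and e: "t \<cdot> z = d \<cdot> w"
    have nw: "n \<cdot> w \<in> Hom C Q (PA B)" using comp_hom w n by blast
    have rnw: "rA B \<cdot> (n \<cdot> w) \<in> Hom C Q (pcar B)" using comp_hom nw dB by blast
    have "d \<cdot> w = t \<cdot> (g \<cdot> (d \<cdot> w))" using e[symmetric] assoc[OF z tH gH] gt id_l[OF z] by simp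
    then have t1: "tbB \<cdot> (rA B \<cdot> (n \<cdot> w)) = n \<cdot> w" using tbrn[OF w] by blast
    obtain u where u: "u \<in> Hom C Q A" "a1 \<cdot> u = rA B \<cdot> (n \<cdot> w)" "a2 \<cdot> u = w" using pb_ex[OF pA rnw w t1] by blast
    have "(pmap B \<cdot> a1) \<cdot> u = z"
    proof -
      have "(pmap B \<cdot> a1) \<cdot> u = g \<cdot> (qA B \<cdot> (n \<cdot> w))"
        using assoc[OF u(1) dA(3) fB] u assoc[OF nw dB(4) fB] assoc[OF nw dB(3) gH] dB(5) by simp
      also have "\<dots> = g \<cdot> (t \<cdot> z)" using assoc[OF w n dB(3)] nq e by simp
      also have "\<dots> = z" using assoc[OF z tH gH] gt id_l[OF z] by simp
      finally show ?thesis .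
    qed
    then have ex: "u \<in> Hom C Q A \<and> (pmap B \<cdot> a1) \<cdot> u = z \<and> a2 \<cdot> u = w" using u by blast
    have un: "v = u" if v: "v \<in> Hom C Q A \<and> (pmap B \<cdot> a1) \<cdot> v = z \<and> a2 \<cdot> v = w" for v
    proof (rule pb_uniq[OF pA])
      show "v \<in> Hom C Q A" "u \<in> Hom C Q A" using v u by auto
      have "a1 \<cdot> v = rA B \<cdot> (tbB \<cdot> (a1 \<cdot> v))" using assoc[OF _ tbB(1) dB(4)] tbB id_l comp_hom v dA by metis
      also have "\<dots> = rA B \<cdot> (n \<cdot> w)" using assoc[OF _ dA(3) tbB(1)] assoc[OF _ dA(4) n] dA(5) v by metis
      finally show "a1 \<cdot> v = a1 \<cdot> u" using u by simp
      show "a2 \<cdot> v = a2 \<cdot> u" using u v by simp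
    qed
    show "\<exists>!u. u \<in> Hom C Q A \<and> (pmap B \<cdot> a1) \<cdot> u = z \<and> a2 \<cdot> u = w" using ex un by blast
  qed
  have SA: "sig_ob Sig Z Ap"
  proof -
    have f3: "\<And>X Y f s Y' v X' f' v' s'. Sig X Y f s \<Longrightarrow> v \<in> Hom C Y' Y \<Longrightarrow>
       is_pullback C Y' X Y v f X' f' v' \<Longrightarrow> s' \<in> Hom C Y' X' \<Longrightarrow>
       f' \<cdot> s' = ide C Y' \<Longrightarrow> v' \<cdot> s' = s \<cdot> v \<Longrightarrow> Sig X' Y' f' s'"
      using fib unfolding fibrational_def by blast
    have "Sig A Z (pmap B \<cdot> a1) sAp"
      by (rule f3[OF SD[folded W_def d_def \<sigma>_def] tH pbA sAp(1) fas sAp(3)])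
    then show ?thesis unfolding sig_ob_def Ap_def by simp
  qed
  have a1h: "a1 \<in> pt_hom C Z Ap B" unfolding Ap_def using Ap B dA sAp by (intro pt_homI) (auto simp: Ap_def)
  have tbm: "mono C (pcar B) (PA B) tbB" unfolding mono_def
  proof (intro conjI allI impI)
    show "tbB \<in> Hom C (pcar B) (PA B)" by (rule tbB(1))
    fix Q x y assume x: "x \<in> Hom C Q (pcar B)" and y: "y \<in> Hom C Q (pcar B)" and e: "tbB \<cdot> x = tbB \<cdot> y"
    show "x = y" using assoc[OF x tbB(1) dB(4)] assoc[OF y tbB(1) dB(4)] tbB id_l[OF x] id_l[OF y] e by simp
  qed
  have a1m: "mono C A (pcar B) a1" by (rule pb_mono[OF pA nm])
  have a1pm: "pt_mono C Z Ap B a1" using mono_pt_mono[of Ap B a1] a1m a1h by (simp add: Ap_def)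
  have inS: "(Ap, a1) \<in> subrep C Z (sig_ob Sig Z) B" unfolding subrep_def using Ap SA a1pm by simp
  have PAp: "pcar Ap = A" "pmap Ap = pmap B \<cdot> a1" "psec Ap = sAp" unfolding Ap_def by simp_all
  define u where "u = bc_hom C Y Z g Ap B a1"
  note u = bc_hom_props[OF Ap B, of a1, unfolded PAp, OF dA(3) refl, folded u_def]
  note uh = pt_homD[OF bc_pt_hom[OF a1h], folded u_def]
  have um: "mono C (PA Ap) (PA B) u" using pt_mono_mono[OF bc_mono[OF a1pm]] u_def by simp
  note pAp = bc_pb[OF Ap, unfolded PAp] note dP = pbD[OF pAp]
  note sap = sA_props[OF Ap]
  have a2r: "a2 \<cdot> rA Ap \<in> Hom C (PA Ap) W" using comp_hom dA dP by blast
  have eg: "g \<cdot> qA Ap = g \<cdot> (d \<cdot> (a2 \<cdot> rA Ap))"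
  proof -
    have "d \<cdot> (a2 \<cdot> rA Ap) = t \<cdot> (g \<cdot> qA Ap)"
      using assoc[OF dP(4) dA(4) dH] da2 assoc[OF dP(4) fa tH] dP(5) by simp
    then show ?thesis using assoc[OF comp_hom[OF dP(3) gH] tH gH] gt id_l[OF comp_hom[OF dP(3) gH]] by simp
  qed
  obtain \<phi> where ph: "\<phi> \<in> Hom C (PA Ap) W" "qA B \<cdot> (n \<cdot> \<phi>) = qA Ap" "rA B \<cdot> (n \<cdot> \<phi>) = rA B \<cdot> (n \<cdot> (a2 \<cdot> rA Ap))"
    using key[OF dP(3) a2r eg] by blast
  have nph: "n \<cdot> \<phi> = u"
  proof (rule pb_uniq[OF pB])
    show "n \<cdot> \<phi> \<in> Hom C (PA Ap) (PA B)" using comp_hom ph n by blast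
    show "u \<in> Hom C (PA Ap) (PA B)" using u by blast
    show "qA B \<cdot> n \<cdot> \<phi> = qA B \<cdot> u" using ph u by simp
    have "rA B \<cdot> (n \<cdot> (a2 \<cdot> rA Ap)) = rA B \<cdot> (tbB \<cdot> (a1 \<cdot> rA Ap))"
      using assoc[OF dP(4) dA(4) n] assoc[OF dP(4) dA(3) tbB(1)] dA(5) by simp
    also have "\<dots> = a1 \<cdot> rA Ap" using assoc[OF comp_hom[OF dP(4) dA(3)] tbB(1) dB(4)] tbB id_l comp_hom dP dA by metis
    finally show "rA B \<cdot> n \<cdot> \<phi> = rA B \<cdot> u" using ph u by simp
  qed
  have tgd: "t \<cdot> (g \<cdot> d) \<in> Hom C W Y" using comp_hom dH gH tH by blast
  have iW: "ide C W \<in> Hom C W W" using id_hom1[OF dH] .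
  have eg2: "g \<cdot> (t \<cdot> (g \<cdot> d)) = g \<cdot> (d \<cdot> ide C W)"
    using assoc[OF comp_hom[OF dH gH] tH gH] gt id_l[OF comp_hom[OF dH gH]] id_r[OF dH] by simp
  obtain w' where w': "w' \<in> Hom C W W" "qA B \<cdot> (n \<cdot> w') = t \<cdot> (g \<cdot> d)" "rA B \<cdot> (n \<cdot> w') = rA B \<cdot> (n \<cdot> ide C W)"
    using key[OF tgd iW eg2] by blast
  have dw': "d \<cdot> w' = t \<cdot> (g \<cdot> (d \<cdot> w'))"
  proof -
    have "d \<cdot> w' = t \<cdot> (g \<cdot> d)" using assoc[OF w'(1) n dB(3)] nq w' by simp
    moreover have "g \<cdot> (t \<cdot> (g \<cdot> d)) = g \<cdot> d" using assoc[OF comp_hom[OF dH gH] tH gH] gt id_l[OF comp_hom[OF dH gH]] by simp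
    ultimately show ?thesis by simp
  qed
  have "tbB \<cdot> (rA B \<cdot> n) = n \<cdot> w'"
  proof -
    have "tbB \<cdot> (rA B \<cdot> n) = tbB \<cdot> (rA B \<cdot> (n \<cdot> w'))" using w'(3) id_r[OF n] by simp
    also have "\<dots> = n \<cdot> w'" using tbrn[OF w'(1) dw'] .
    finally show ?thesis .
  qed
  then obtain \<alpha> where al: "\<alpha> \<in> Hom C W A" "a1 \<cdot> \<alpha> = rA B \<cdot> n" "a2 \<cdot> \<alpha> = w'" using pb_ex[OF pA rn w'(1)] by blast
  have "g \<cdot> d = (pmap B \<cdot> a1) \<cdot> \<alpha>"
    using assoc[OF al(1) dA(3) fB] al assoc[OF n dB(4) fB] dB(5) assoc[OF n dB(3) gH] nq by simp
  then obtain \<psi> where ps: "\<psi> \<in> Hom C W (PA Ap)" "qA Ap \<cdot> \<psi> = d" "rA Ap \<cdot> \<psi> = \<alpha>"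
    using pb_ex[OF pAp dH al(1)] by blast
  have ups: "u \<cdot> \<psi> = n"
  proof (rule pb_uniq[OF pB])
    show "u \<cdot> \<psi> \<in> Hom C W (PA B)" using comp_hom ps u by blast
    show "n \<in> Hom C W (PA B)" by (rule n)
    show "qA B \<cdot> u \<cdot> \<psi> = qA B \<cdot> n" using assoc[OF ps(1) u(1) dB(3)] u ps nq by simp
    show "rA B \<cdot> u \<cdot> \<psi> = rA B \<cdot> n" using assoc[OF ps(1) u(1) dB(4)] u assoc[OF ps(1) dP(4) dA(3)] ps al by simp
  qed
  have pp: "\<phi> \<cdot> \<psi> = ide C W"
    using mono_cancel[OF nm comp_hom[OF ps(1) ph(1)] iW] assoc[OF ps(1) ph(1) n] nph ups id_r[OF n] by simp
  have pp2: "\<psi> \<cdot> \<phi> = ide C (PA Ap)"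
    using mono_cancel[OF um comp_hom[OF ph(1) ps(1)] id_hom1[OF dP(3)]] assoc[OF ph(1) ps(1) u(1)] nph ups id_r[OF u(1)] by simp
  have bA: "pt_ob C Y (bc_ob C Y Z g Ap)" using bc_pt[OF Ap] .
  have phh: "\<phi> \<in> pt_hom C Y (bc_ob C Y Z g Ap) D"
  proof (rule pt_homI[OF bA D])
    show "\<phi> \<in> Hom C (pcar (bc_ob C Y Z g Ap)) (pcar D)" using ph W_def by simp
    show "pmap D \<cdot> \<phi> = pmap (bc_ob C Y Z g Ap)" using nq[unfolded d_def] assoc[OF ph(1) n dB(3)] nph u by simp
    have "n \<cdot> (\<phi> \<cdot> sA Ap) = n \<cdot> \<sigma>" using assoc[OF sap(1) ph(1) n] nph uh ns by simp
    then show "\<phi> \<cdot> psec (bc_ob C Y Z g Ap) = psec D"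
      using mono_cancel[OF nm comp_hom[OF sap(1) ph(1)] sgH] \<sigma>_def by simp
  qed
  have psh: "\<psi> \<in> pt_hom C Y D (bc_ob C Y Z g Ap)"
  proof (rule pt_homI[OF D bA])
    show "\<psi> \<in> Hom C (pcar D) (pcar (bc_ob C Y Z g Ap))" using ps W_def by simp
    show "pmap (bc_ob C Y Z g Ap) \<cdot> \<psi> = pmap D" using ps d_def by simp
    have "u \<cdot> (\<psi> \<cdot> \<sigma>) = u \<cdot> sA Ap" using assoc[OF sgH ps(1) u(1)] ups ns uh by simp
    then show "\<psi> \<cdot> psec D = psec (bc_ob C Y Z g Ap)"
      using mono_cancel[OF um comp_hom[OF sgH ps(1)] sap(1)] \<sigma>_def by simp
  qed
  have "pt_iso C Y (bc_ob C Y Z g Ap) D \<phi>" unfolding pt_iso_def using phh psh pp pp2 W_def by auto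
  then have "sub_equiv C Y (bc_ob C Y Z g Ap, u) (D, n)" unfolding sub_equiv_def using nph by auto
  then show ?thesis using inS u_def by blast
qed

end

context bcs begin

lemma bc_sub_cls:
  assumes r: "(A, m) \<in> subrep C Z (sig_ob Sig Z) B"
  shows "bc_sub C Sig Y Z g B (cls Z (sig_ob Sig Z) B (A, m)) =
         cls Y (sig_ob Sig Y) (bc_ob C Y Z g B) (bc_ob C Y Z g A, bc_hom C Y Z g A B m)"
proof
  note br = bcr_sub[OF r]
  show "bc_sub C Sig Y Z g B (cls Z (sig_ob Sig Z) B (A, m)) \<subseteq> cls Y (sig_ob Sig Y) (bc_ob C Y Z g B) (bc_ob C Y Z g A, bc_hom C Y Z g A B m)"
  proof
    fix r' assume "r' \<in> bc_sub C Sig Y Z g B (cls Z (sig_ob Sig Z) B (A, m))"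
    then obtain A' m' where r': "r' \<in> subrep C Y (sig_ob Sig Y) (bc_ob C Y Z g B)"
      and a': "(A', m') \<in> subrep C Z (sig_ob Sig Z) B" "sub_equiv C Z (A', m') (A, m)"
      and e: "sub_equiv C Y r' (bc_ob C Y Z g A', bc_hom C Y Z g A' B m')"
      unfolding bc_sub_def cls_def by blast
    have "sub_equiv C Y r' (bc_ob C Y Z g A, bc_hom C Y Z g A B m)"
      using sub_trans[OF br e bc_equiv[OF r a']] .
    then show "r' \<in> cls Y (sig_ob Sig Y) (bc_ob C Y Z g B) (bc_ob C Y Z g A, bc_hom C Y Z g A B m)"
      unfolding cls_def using r' by blast
  qed
  show "cls Y (sig_ob Sig Y) (bc_ob C Y Z g B) (bc_ob C Y Z g A, bc_hom C Y Z g A B m) \<subseteq> bc_sub C Sig Y Z g B (cls Z (sig_ob Sig Z) B (A, m))"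
  proof
    fix r' assume "r' \<in> cls Y (sig_ob Sig Y) (bc_ob C Y Z g B) (bc_ob C Y Z g A, bc_hom C Y Z g A B m)"
    then have r': "r' \<in> subrep C Y (sig_ob Sig Y) (bc_ob C Y Z g B)"
      and e: "sub_equiv C Y r' (bc_ob C Y Z g A, bc_hom C Y Z g A B m)" unfolding cls_def by auto
    have "(A, m) \<in> cls Z (sig_ob Sig Z) B (A, m)" unfolding cls_def using r sub_refl[OF r] by blast
    then show "r' \<in> bc_sub C Sig Y Z g B (cls Z (sig_ob Sig Z) B (A, m))"
      unfolding bc_sub_def using r' e by blast
  qed
qed

lemma bc_bij:
  assumes B: "pt_ob C Z B"
  shows "bij_betw (bc_sub C Sig Y Z g B) (subobjects C Z (sig_ob Sig Z) B)
           (subobjects C Y (sig_ob Sig Y) (bc_ob C Y Z g B))"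
  unfolding bij_betw_def subobjects_cls
proof
  show "inj_on (bc_sub C Sig Y Z g B) (cls Z (sig_ob Sig Z) B ` subrep C Z (sig_ob Sig Z) B)"
  proof (rule inj_onI)
    fix c1 c2 assume c1: "c1 \<in> cls Z (sig_ob Sig Z) B ` subrep C Z (sig_ob Sig Z) B"
      and c2: "c2 \<in> cls Z (sig_ob Sig Z) B ` subrep C Z (sig_ob Sig Z) B"
      and e: "bc_sub C Sig Y Z g B c1 = bc_sub C Sig Y Z g B c2"
    obtain A1 m1 where r1: "(A1, m1) \<in> subrep C Z (sig_ob Sig Z) B" "c1 = cls Z (sig_ob Sig Z) B (A1, m1)" using c1 by auto
    obtain A2 m2 where r2: "(A2, m2) \<in> subrep C Z (sig_ob Sig Z) B" "c2 = cls Z (sig_ob Sig Z) B (A2, m2)" using c2 by auto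
    have "cls Y (sig_ob Sig Y) (bc_ob C Y Z g B) (bc_ob C Y Z g A1, bc_hom C Y Z g A1 B m1) =
          cls Y (sig_ob Sig Y) (bc_ob C Y Z g B) (bc_ob C Y Z g A2, bc_hom C Y Z g A2 B m2)"
      using e unfolding r1(2) r2(2) bc_sub_cls[OF r1(1)] bc_sub_cls[OF r2(1)] .
    then have "sub_equiv C Y (bc_ob C Y Z g A1, bc_hom C Y Z g A1 B m1) (bc_ob C Y Z g A2, bc_hom C Y Z g A2 B m2)"
      using cls_eq[OF bcr_sub[OF r1(1)] bcr_sub[OF r2(1)]] by blast
    then have "sub_equiv C Z (A1, m1) (A2, m2)" by (rule bc_reflect[OF r1(1) r2(1)])
    then show "c1 = c2" unfolding r1(2) r2(2) using cls_eq[OF r1(1) r2(1)] by blast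
  qed
  show "bc_sub C Sig Y Z g B ` cls Z (sig_ob Sig Z) B ` subrep C Z (sig_ob Sig Z) B =
      cls Y (sig_ob Sig Y) (bc_ob C Y Z g B) ` subrep C Y (sig_ob Sig Y) (bc_ob C Y Z g B)"
  proof
    show "bc_sub C Sig Y Z g B ` cls Z (sig_ob Sig Z) B ` subrep C Z (sig_ob Sig Z) B \<subseteq>
      cls Y (sig_ob Sig Y) (bc_ob C Y Z g B) ` subrep C Y (sig_ob Sig Y) (bc_ob C Y Z g B)"
    proof
      fix c assume "c \<in> bc_sub C Sig Y Z g B ` cls Z (sig_ob Sig Z) B ` subrep C Z (sig_ob Sig Z) B"
      then obtain A m where r: "(A, m) \<in> subrep C Z (sig_ob Sig Z) B"
        and c: "c = bc_sub C Sig Y Z g B (cls Z (sig_ob Sig Z) B (A, m))" by auto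
      show "c \<in> cls Y (sig_ob Sig Y) (bc_ob C Y Z g B) ` subrep C Y (sig_ob Sig Y) (bc_ob C Y Z g B)"
        unfolding c bc_sub_cls[OF r] using bcr_sub[OF r] by (rule imageI)
    qed
    show "cls Y (sig_ob Sig Y) (bc_ob C Y Z g B) ` subrep C Y (sig_ob Sig Y) (bc_ob C Y Z g B) \<subseteq>
      bc_sub C Sig Y Z g B ` cls Z (sig_ob Sig Z) B ` subrep C Z (sig_ob Sig Z) B"
    proof
      fix c assume "c \<in> cls Y (sig_ob Sig Y) (bc_ob C Y Z g B) ` subrep C Y (sig_ob Sig Y) (bc_ob C Y Z g B)"
      then obtain D n where r: "(D, n) \<in> subrep C Y (sig_ob Sig Y) (bc_ob C Y Z g B)"
        and c: "c = cls Y (sig_ob Sig Y) (bc_ob C Y Z g B) (D, n)" by auto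
      obtain Ap a1 where a: "(Ap, a1) \<in> subrep C Z (sig_ob Sig Z) B"
        "sub_equiv C Y (bc_ob C Y Z g Ap, bc_hom C Y Z g Ap B a1) (D, n)" using bc_surj[OF B r] by blast
      have "cls Y (sig_ob Sig Y) (bc_ob C Y Z g B) (bc_ob C Y Z g Ap, bc_hom C Y Z g Ap B a1) = c"
        unfolding c using cls_eq[OF bcr_sub[OF a(1)] r] a(2) by blast
      then have "c = bc_sub C Sig Y Z g B (cls Z (sig_ob Sig Z) B (Ap, a1))"
        using bc_sub_cls[OF a(1)] by simp
      then show "c \<in> bc_sub C Sig Y Z g B ` cls Z (sig_ob Sig Z) B ` subrep C Z (sig_ob Sig Z) B"
        using a(1) by blast
    qed
  qed
qed

end

theorem theorem4p5:
  fixes C :: "('o,'m) cat"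
    and Sig :: "'o \<Rightarrow> 'o \<Rightarrow> 'm \<Rightarrow> 'm \<Rightarrow> bool"
    and Y Z :: 'o and g t :: 'm
  assumes "finitely_complete C"
    and "fibrational C Sig"
    and "sigma_maltsev C Sig"
    and "split_epi C Y Z g t"
  shows "(\<forall>A B h. pt_ob C Z A \<longrightarrow> sig_ob Sig Z A \<longrightarrow> pt_ob C Z B \<longrightarrow>
            h \<in> pt_hom C Y (bc_ob C Y Z g A) (bc_ob C Y Z g B) \<longrightarrow>
            (\<exists>!k. k \<in> pt_hom C Z A B \<and> bc_hom C Y Z g A B k = h))
       \<and> (\<forall>A B m. pt_mono C Z A B m \<longrightarrow>
            pt_mono C Y (bc_ob C Y Z g A) (bc_ob C Y Z g B) (bc_hom C Y Z g A B m))
       \<and> (\<forall>B. pt_ob C Z B \<longrightarrow>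
            bij_betw (bc_sub C Sig Y Z g B)
              (subobjects C Z (sig_ob Sig Z) B)
              (subobjects C Y (sig_ob Sig Y) (bc_ob C Y Z g B)))"
proof -
  interpret bcs C Y Z g t Sig
    by (unfold_locales) (use assms in auto)
  show ?thesis
  proof (intro conjI allI impI)
    show "\<exists>!k. k \<in> pt_hom C Z A B \<and> bc_hom C Y Z g A B k = h"
      if "pt_ob C Z A" "sig_ob Sig Z A" "pt_ob C Z B" "h \<in> pt_hom C Y (bc_ob C Y Z g A) (bc_ob C Y Z g B)" for A B h
      using bc_ff[OF that] .
    show "pt_mono C Y (bc_ob C Y Z g A) (bc_ob C Y Z g B) (bc_hom C Y Z g A B m)"
      if "pt_mono C Z A B m" for A B m using bc_mono[OF that] .
    show "bij_betw (bc_sub C Sig Y Z g B) (subobjects C Z (sig_ob Sig Z) B)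
              (subobjects C Y (sig_ob Sig Y) (bc_ob C Y Z g B))" if "pt_ob C Z B" for B
      using bc_bij[OF that] .
  qed
qed


end
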